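(* Let $\Sigma$ be an oriented piecewise smooth surface whose anisotropic mean curvature $\Lambda$ is constant on $\Sigma^*$. Then on $\Sigma^*$, $$L[\gamma]=\Lambda^2-2K_\Sigma/K_W,$$ where $\gamma$ denotes $\gamma\circ\nu$.
   Context: $\Sigma^*$ is the union of the smooth faces of $\Sigma$, $\nu$ its unit normal. $\gamma$ is a positive $C^3$ function on $S^2$, $D\gamma$ its gradient on $S^2$, $\tilde\gamma$ its degree-one homogeneous extension, $A=D^2\gamma+\gamma I$ (evaluated at $\nu$). The Cahn–Hoffman field is $\xi=\nabla\tilde\gamma(\nu)=D\gamma_\nu+\gamma\nu$, $d\xi=A\,d\nu$, and $\Lambda=-\nabla\cdot\xi$. The Jacobi operator is $L[\psi]=\nabla\cdot(A\nabla\psi)+\langle d\xi,d\nu\rangle\psi$, which for a variation $\delta X=V+\psi\nu$ ($V$ tangent) gives $\delta\Lambda=L[\psi]+\nabla\Lambda\cdot V$. $K_\Sigma$ is the Gauss curvature of $\Sigma$ and $K_W=1/\det A$ is the Gauss curvature of the Wulff shape at $\xi$, so $K_\Sigma/K_W=\det d\xi$. *)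

theory Defs
  imports "HOL-Analysis.Analysis"
begin

text \<open>Local setting: a smooth face of the piecewise smooth surface is given by a
  regular parametrization X : U \<subseteq> R^2 \<rightarrow> R^3 (U open), oriented by the
  normalized cross product of the coordinate tangent vectors.\<close>

fun Ck :: "nat \<Rightarrow> ('a::real_normed_vector \<Rightarrow> 'b::real_normed_vector) \<Rightarrow> 'a set \<Rightarrow> bool" where
  "Ck 0 f S = continuous_on S f"
| "Ck (Suc k) f S = (f differentiable_on S \<and> (\<forall>v. Ck k (\<lambda>x. frechet_derivative f (at x) v) S))"

definition ev :: "nat \<Rightarrow> real \<times> real" where
  "ev i = (if i = 0 then (1, 0) else (0, 1))"

definition pd :: "nat \<Rightarrow> (real \<times> real \<Rightarrow> 'b::real_normed_vector) \<Rightarrow> real \<times> real \<Rightarrow> 'b" where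
  "pd i f x = frechet_derivative f (at x) (ev i)"

definition gmet :: "(real \<times> real \<Rightarrow> real^3) \<Rightarrow> nat \<Rightarrow> nat \<Rightarrow> real \<times> real \<Rightarrow> real" where
  "gmet X i j x = pd i X x \<bullet> pd j X x"

definition gdet :: "(real \<times> real \<Rightarrow> real^3) \<Rightarrow> real \<times> real \<Rightarrow> real" where
  "gdet X x = gmet X 0 0 x * gmet X 1 1 x - gmet X 0 1 x * gmet X 1 0 x"

definition ginv :: "(real \<times> real \<Rightarrow> real^3) \<Rightarrow> nat \<Rightarrow> nat \<Rightarrow> real \<times> real \<Rightarrow> real" where
  "ginv X i j x =
     (if i = 0 \<and> j = 0 then gmet X 1 1 x / gdet X x
      else if i = 1 \<and> j = 1 then gmet X 0 0 x / gdet X x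
      else - gmet X i j x / gdet X x)"

definition nrm :: "(real \<times> real \<Rightarrow> real^3) \<Rightarrow> real \<times> real \<Rightarrow> real^3" where
  "nrm X x = (1 / norm (cross3 (pd 0 X x) (pd 1 X x))) *\<^sub>R cross3 (pd 0 X x) (pd 1 X x)"

definition sgrad :: "(real \<times> real \<Rightarrow> real^3) \<Rightarrow> (real \<times> real \<Rightarrow> real) \<Rightarrow> real \<times> real \<Rightarrow> real^3" where
  "sgrad X f x = (\<Sum>i<2. \<Sum>j<2. (ginv X i j x * pd j f x) *\<^sub>R pd i X x)"

definition sdiv :: "(real \<times> real \<Rightarrow> real^3) \<Rightarrow> (real \<times> real \<Rightarrow> real^3) \<Rightarrow> real \<times> real \<Rightarrow> real" where
  "sdiv X Y x = (\<Sum>i<2. \<Sum>j<2. ginv X i j x * (pd i Y x \<bullet> pd j X x))"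

definition dinner :: "(real \<times> real \<Rightarrow> real^3) \<Rightarrow> (real \<times> real \<Rightarrow> real^3) \<Rightarrow> (real \<times> real \<Rightarrow> real^3) \<Rightarrow> real \<times> real \<Rightarrow> real" where
  "dinner X Y Z x = (\<Sum>i<2. \<Sum>j<2. ginv X i j x * (pd i Y x \<bullet> pd j Z x))"

text \<open>determinant of the endomorphism of the tangent plane T_x sending the
  coordinate tangent vector pd i X x to V i (V i assumed tangent)\<close>
definition tdet :: "(real \<times> real \<Rightarrow> real^3) \<Rightarrow> (nat \<Rightarrow> real^3) \<Rightarrow> real \<times> real \<Rightarrow> real" where
  "tdet X V x =
     (let M = (\<lambda>k i. \<Sum>j<2. ginv X k j x * (V i \<bullet> pd j X x))
      in M 0 0 * M 1 1 - M 0 1 * M 1 0)"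

definition grad3 :: "(real^3 \<Rightarrow> real) \<Rightarrow> real^3 \<Rightarrow> real^3" where
  "grad3 F y = (\<chi> i. frechet_derivative F (at y) (axis i 1))"

definition gext :: "(real^3 \<Rightarrow> real) \<Rightarrow> real^3 \<Rightarrow> real" where
  "gext \<gamma> y = norm y * \<gamma> ((1 / norm y) *\<^sub>R y)"

text \<open>A = D^2\<gamma> + \<gamma> I at the unit vector n, realised as the Hessian of the
  homogeneous extension at n (acting on the tangent plane T_n S^2)\<close>
definition Amap :: "(real^3 \<Rightarrow> real) \<Rightarrow> real^3 \<Rightarrow> real^3 \<Rightarrow> real^3" where
  "Amap \<gamma> n w = frechet_derivative (grad3 (gext \<gamma>)) (at n) w"

definition cahn_hoffman :: "(real^3 \<Rightarrow> real) \<Rightarrow> (real \<times> real \<Rightarrow> real^3) \<Rightarrow> real \<times> real \<Rightarrow> real^3" where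
  "cahn_hoffman \<gamma> X x = grad3 (gext \<gamma>) (nrm X x)"

definition aniso_mean_curv :: "(real^3 \<Rightarrow> real) \<Rightarrow> (real \<times> real \<Rightarrow> real^3) \<Rightarrow> real \<times> real \<Rightarrow> real" where
  "aniso_mean_curv \<gamma> X x = - sdiv X (cahn_hoffman \<gamma> X) x"

definition jacobi :: "(real^3 \<Rightarrow> real) \<Rightarrow> (real \<times> real \<Rightarrow> real^3) \<Rightarrow> (real \<times> real \<Rightarrow> real) \<Rightarrow> real \<times> real \<Rightarrow> real" where
  "jacobi \<gamma> X \<psi> x =
     sdiv X (\<lambda>y. Amap \<gamma> (nrm X y) (sgrad X \<psi> y)) x
     + dinner X (cahn_hoffman \<gamma> X) (nrm X) x * \<psi> x"

definition gauss_curv :: "(real \<times> real \<Rightarrow> real^3) \<Rightarrow> real \<times> real \<Rightarrow> real" where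
  "gauss_curv X x = tdet X (\<lambda>i. pd i (nrm X) x) x"

text \<open>Gauss curvature of the Wulff shape at \<xi>: K_W = 1 / det A\<close>
definition wulff_curv :: "(real^3 \<Rightarrow> real) \<Rightarrow> (real \<times> real \<Rightarrow> real^3) \<Rightarrow> real \<times> real \<Rightarrow> real" where
  "wulff_curv \<gamma> X x = 1 / tdet X (\<lambda>i. Amap \<gamma> (nrm X x) (pd i X x)) x"

end

theory Submission
  imports Defs
begin


lemma sum2: "(\<Sum>i<(2::nat). f i) = f 0 + f 1"
  by (simp add: numeral_2_eq_2)

lemma pd_has: "(f has_derivative f') (at x) \<Longrightarrow> pd i f x = f' (ev i)"
  unfolding pd_def by (metis frechet_derivative_at)

lemma pd_local:
  "open S \<Longrightarrow> x \<in> S \<Longrightarrow> (\<And>y. y \<in> S \<Longrightarrow> f y = g y) \<Longrightarrow> f differentiable at x \<Longrightarrow> pd i f x = pd i g x"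
  unfolding pd_def using frechet_derivative_transform_within_open by metis

lemma diff_local:
  "open S \<Longrightarrow> x \<in> S \<Longrightarrow> (\<And>y. y \<in> S \<Longrightarrow> f y = g y) \<Longrightarrow> f differentiable at x \<Longrightarrow> g differentiable at x"
  unfolding differentiable_def using has_derivative_transform_within_open by metis

lemma fd_works: "f differentiable at x \<Longrightarrow> (f has_derivative frechet_derivative f (at x)) (at x)"
  using frechet_derivative_works by blast

lemma fd_linear: "f differentiable at x \<Longrightarrow> linear (frechet_derivative f (at x))"
  using fd_works has_derivative_linear by blast

lemma pd_bil:
  fixes f :: "real \<times> real \<Rightarrow> 'a::real_normed_vector" and g :: "real \<times> real \<Rightarrow> 'b::real_normed_vector"
    and prod :: "'a \<Rightarrow> 'b \<Rightarrow> 'c::real_normed_vector"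
  assumes "bounded_bilinear prod" "f differentiable at x" "g differentiable at x"
  shows "pd i (\<lambda>y. prod (f y) (g y)) x = prod (pd i f x) (g x) + prod (f x) (pd i g x)"
proof -
  have "((\<lambda>y. prod (f y) (g y)) has_derivative
      (\<lambda>h. prod (f x) (frechet_derivative g (at x) h) + prod (frechet_derivative f (at x) h) (g x))) (at x)"
    using bounded_bilinear.FDERIV[OF assms(1) fd_works[OF assms(2)] fd_works[OF assms(3)]] .
  then show ?thesis unfolding pd_def by (subst pd_has[unfolded pd_def]) (auto simp: add.commute)
qed

lemma diff_bil:
  fixes f :: "'d::real_normed_vector \<Rightarrow> 'a::real_normed_vector" and g :: "'d \<Rightarrow> 'b::real_normed_vector"
    and prod :: "'a \<Rightarrow> 'b \<Rightarrow> 'c::real_normed_vector"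
  assumes "bounded_bilinear prod" "f differentiable at x" "g differentiable at x"
  shows "(\<lambda>y. prod (f y) (g y)) differentiable at x"
  using bounded_bilinear.FDERIV[OF assms(1) fd_works[OF assms(2)] fd_works[OF assms(3)]]
  unfolding differentiable_def by blast

lemma pd_add: "f differentiable at x \<Longrightarrow> g differentiable at x \<Longrightarrow> pd i (\<lambda>y. f y + g y) x = pd i f x + pd i g x"
  by (subst pd_has[OF has_derivative_add[OF fd_works fd_works]]) (auto simp: pd_def)

lemma pd_diff: "f differentiable at x \<Longrightarrow> g differentiable at x \<Longrightarrow> pd i (\<lambda>y. f y - g y) x = pd i f x - pd i g x"
  by (subst pd_has[OF has_derivative_diff[OF fd_works fd_works]]) (auto simp: pd_def)

lemma pd_minus: "f differentiable at x \<Longrightarrow> pd i (\<lambda>y. - f y) x = - pd i f x"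
  by (subst pd_has[OF has_derivative_minus[OF fd_works]]) (auto simp: pd_def)

lemma pd_const: "pd i (\<lambda>y. c) x = 0"
  by (subst pd_has[OF has_derivative_const]) auto

lemma pd_sum: "finite A \<Longrightarrow> (\<And>a. a \<in> A \<Longrightarrow> f a differentiable at x) \<Longrightarrow> pd i (\<lambda>y. \<Sum>a\<in>A. f a y) x = (\<Sum>a\<in>A. pd i (f a) x)"
  by (subst pd_has[OF has_derivative_sum[OF fd_works]]) (auto simp: pd_def)

lemma pd_compose:
  assumes "f differentiable at x" "g differentiable at (f x)"
  shows "pd i (\<lambda>y. g (f y)) x = frechet_derivative g (at (f x)) (pd i f x)"
proof -
  have "((g \<circ> f) has_derivative (frechet_derivative g (at (f x)) \<circ> frechet_derivative f (at x))) (at x)"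
    by (rule diff_chain_at[OF fd_works[OF assms(1)] fd_works[OF assms(2)]])
  then show ?thesis unfolding pd_def by (subst pd_has[unfolded pd_def]) (auto simp: o_def)
qed

lemma diff_compose:
  "f differentiable at x \<Longrightarrow> g differentiable at (f x) \<Longrightarrow> (\<lambda>y. g (f y)) differentiable at x"
  using differentiable_chain_at[of f x g] by (simp add: o_def)

lemma fd_decomp:
  assumes "f differentiable at x"
  shows "frechet_derivative f (at x) v = fst v *\<^sub>R pd 0 f x + snd v *\<^sub>R pd 1 f x"
proof -
  have v: "v = fst v *\<^sub>R ev 0 + snd v *\<^sub>R ev 1" by (cases v) (simp add: ev_def)
  have l: "linear (frechet_derivative f (at x))" using fd_linear[OF assms] .
  show ?thesis
    by (subst v) (simp add: linear_add[OF l] linear_scale[OF l] pd_def)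
qed

lemma pd_zero_const:
  assumes "open S" "x \<in> S" "\<And>y. y \<in> S \<Longrightarrow> f y = c"
  shows "pd i f x = 0"
proof -
  have "pd i (\<lambda>y. c) x = pd i f x"
    by (rule pd_local[OF assms(1,2)]) (auto simp: assms(3))
  then show ?thesis by (simp add: pd_const)
qed

section \<open>Symmetry of mixed partials\<close>

lemma ball_add: "norm v < r \<Longrightarrow> x + v \<in> ball x r"
  by (metis add_diff_cancel_left' dist_norm dist_commute mem_ball)

lemma schwarz_aux:
  fixes f :: "'a::real_normed_vector \<Rightarrow> 'b::real_inner"
  assumes r: "0 < r" and fd: "\<And>y. y \<in> ball x r \<Longrightarrow> f differentiable at y"
    and ad: "((\<lambda>y. frechet_derivative f (at y) u) has_derivative A) (at x)"
    and e: "0 < e"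
  shows "\<exists>d>0. \<forall>t. 0 < t \<and> t < d \<longrightarrow>
     norm (f (x + t *\<^sub>R u + t *\<^sub>R w) - f (x + t *\<^sub>R u) - f (x + t *\<^sub>R w) + f x - (t * t) *\<^sub>R A w) \<le> e * (t * t)"
proof -
  define a where "a y = frechet_derivative f (at y) u" for y
  define K where "K = norm u + norm w + 1"
  have K: "K > 0" "norm u \<le> K" "norm w \<le> K" unfolding K_def by (smt (verit) norm_ge_zero)+
  have blA: "linear A" using ad has_derivative_linear by blast
  have e4: "e / (4 * K) > 0" using e K by simp
  from ad[unfolded has_derivative_at'] e4 obtain d1 where d1: "d1 > 0"
    "\<forall>x'. 0 < norm (x' - x) \<and> norm (x' - x) < d1 \<longrightarrow>
        norm (a x' - a x - A (x' - x)) / norm (x' - x) < e / (4 * K)"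
    unfolding a_def by blast
  have bnd: "norm (a y - a x - A (y - x)) \<le> e / (4 * K) * norm (y - x)" if "norm (y - x) < d1" for y
  proof (cases "y = x")
    case True then show ?thesis using linear_0[OF blA] by simp
  next
    case False
    then have "norm (a y - a x - A (y - x)) / norm (y - x) < e / (4 * K)"
      using d1(2) that by auto
    then show ?thesis using False by (simp add: divide_less_eq less_imp_le mult.commute)
  qed
  define d where "d = min d1 r / (2 * K)"
  have dpos: "d > 0" unfolding d_def using d1 r K by simp
  show ?thesis
  proof (intro exI[of _ d] conjI allI impI dpos)
    fix t assume t: "0 < t \<and> t < d"
    have tK: "2 * t * K < d1" "2 * t * K < r"
      using t K unfolding d_def by (auto simp: field_simps)
    have nb: "norm (s *\<^sub>R u + t' *\<^sub>R w) \<le> 2 * t * K" if "0 \<le> s" "s \<le> t" "0 \<le> t'" "t' \<le> t" for s t'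
    proof -
      have "norm (s *\<^sub>R u + t' *\<^sub>R w) \<le> s * norm u + t' * norm w"
        using norm_triangle_ineq[of "s *\<^sub>R u" "t' *\<^sub>R w"] that by simp
      also have "\<dots> \<le> t * K + t * K"
        using that K t by (intro add_mono mult_mono) auto
      finally show ?thesis by (simp add: algebra_simps)
    qed
    define \<phi> where "\<phi> s = f (x + s *\<^sub>R u + t *\<^sub>R w) - f (x + s *\<^sub>R u) - (s * t) *\<^sub>R A w" for s
    have deriv: "(\<phi> has_derivative (\<lambda>h. h *\<^sub>R (a (x + s *\<^sub>R u + t *\<^sub>R w) - a (x + s *\<^sub>R u) - t *\<^sub>R A w))) (at s)"
      if s: "0 \<le> s" "s \<le> t" for s
    proof -
      have in1: "x + s *\<^sub>R u + t *\<^sub>R w \<in> ball x r"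
        using nb[OF s, of t] t tK ball_add[of "s *\<^sub>R u + t *\<^sub>R w" r x] by (simp add: add.assoc)
      have in2: "x + s *\<^sub>R u \<in> ball x r"
        using nb[OF s, of 0] t tK ball_add[of "s *\<^sub>R u" r x] by simp
      have l1: "linear (frechet_derivative f (at (x + s *\<^sub>R u + t *\<^sub>R w)))"
        using fd_linear fd in1 by blast
      have l2: "linear (frechet_derivative f (at (x + s *\<^sub>R u)))"
        using fd_linear fd in2 by blast
      have i1: "((\<lambda>s. x + s *\<^sub>R u + t *\<^sub>R w) has_derivative (\<lambda>h. h *\<^sub>R u)) (at s)"
        by (auto intro!: derivative_eq_intros)
      have i2: "((\<lambda>s. x + s *\<^sub>R u) has_derivative (\<lambda>h. h *\<^sub>R u)) (at s)"
        by (auto intro!: derivative_eq_intros)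
      have c1: "((\<lambda>s. f (x + s *\<^sub>R u + t *\<^sub>R w)) has_derivative
           (\<lambda>h. frechet_derivative f (at (x + s *\<^sub>R u + t *\<^sub>R w)) (h *\<^sub>R u))) (at s)"
        using diff_chain_at[OF i1 fd_works[OF fd[OF in1]]] by (simp add: o_def)
      have c2: "((\<lambda>s. f (x + s *\<^sub>R u)) has_derivative
           (\<lambda>h. frechet_derivative f (at (x + s *\<^sub>R u)) (h *\<^sub>R u))) (at s)"
        using diff_chain_at[OF i2 fd_works[OF fd[OF in2]]] by (simp add: o_def)
      have c3: "((\<lambda>s. (s * t) *\<^sub>R A w) has_derivative (\<lambda>h. (h * t) *\<^sub>R A w)) (at s)"
        by (auto intro!: derivative_eq_intros)
      have "(\<phi> has_derivative (\<lambda>h. frechet_derivative f (at (x + s *\<^sub>R u + t *\<^sub>R w)) (h *\<^sub>R u)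
                 - frechet_derivative f (at (x + s *\<^sub>R u)) (h *\<^sub>R u) - (h * t) *\<^sub>R A w)) (at s)"
        unfolding \<phi>_def by (intro has_derivative_diff c1 c2 c3)
      then show ?thesis
        by (simp only: a_def linear_scale[OF l1] linear_scale[OF l2]) (simp add: algebra_simps)
    qed
    have cont: "continuous_on {0..t} \<phi>"
      by (rule has_derivative_continuous_on) (auto intro: has_derivative_at_withinI deriv)
    obtain s where s: "s \<in> {0<..<t}"
      and mv: "norm (\<phi> t - \<phi> 0) \<le> norm ((t - 0) *\<^sub>R (a (x + s *\<^sub>R u + t *\<^sub>R w) - a (x + s *\<^sub>R u) - t *\<^sub>R A w))"
      using mvt_general[of 0 t \<phi>, OF _ cont deriv] t by force
    define y1 where "y1 = x + s *\<^sub>R u + t *\<^sub>R w"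
    define y2 where "y2 = x + s *\<^sub>R u"
    have s': "0 \<le> s" "s \<le> t" using s by auto
    have ny1: "norm (y1 - x) \<le> 2 * t * K" unfolding y1_def using nb[OF s', of t] t by (simp add: add.assoc)
    have ny2: "norm (y2 - x) \<le> 2 * t * K" unfolding y2_def using nb[OF s', of 0] t by simp
    have eqA: "A (y1 - x) - A (y2 - x) = t *\<^sub>R A w"
      unfolding y1_def y2_def
      by (simp add: linear_add[OF blA] linear_scale[OF blA] add.assoc)
    have "a y1 - a y2 - t *\<^sub>R A w = (a y1 - a x - A (y1 - x)) - (a y2 - a x - A (y2 - x))"
      using eqA by (simp add: algebra_simps)
    then have "norm (a y1 - a y2 - t *\<^sub>R A w) \<le> norm (a y1 - a x - A (y1 - x)) + norm (a y2 - a x - A (y2 - x))"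
      by (metis norm_triangle_ineq4)
    also have "\<dots> \<le> e / (4 * K) * norm (y1 - x) + e / (4 * K) * norm (y2 - x)"
      using bnd ny1 ny2 tK by (intro add_mono bnd) auto
    also have "\<dots> \<le> e / (4 * K) * (2 * t * K) + e / (4 * K) * (2 * t * K)"
      using e4 ny1 ny2 by (intro add_mono mult_left_mono) auto
    also have "\<dots> = e * t" using K by (simp add: field_simps)
    finally have nA: "norm (a y1 - a y2 - t *\<^sub>R A w) \<le> e * t" .
    have "norm (\<phi> t - \<phi> 0) \<le> t * norm (a y1 - a y2 - t *\<^sub>R A w)"
      using mv t by (simp add: y1_def y2_def)
    also have "\<dots> \<le> t * (e * t)" using nA t by (intro mult_left_mono) auto
    finally have "norm (\<phi> t - \<phi> 0) \<le> t * (e * t)" .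
    moreover have "\<phi> t - \<phi> 0 = f (x + t *\<^sub>R u + t *\<^sub>R w) - f (x + t *\<^sub>R u) - f (x + t *\<^sub>R w) + f x - (t * t) *\<^sub>R A w"
      unfolding \<phi>_def by (simp add: algebra_simps)
    ultimately show "norm (f (x + t *\<^sub>R u + t *\<^sub>R w) - f (x + t *\<^sub>R u) - f (x + t *\<^sub>R w) + f x - (t * t) *\<^sub>R A w) \<le> e * (t * t)"
      by (simp add: mult.commute mult.left_commute)
  qed
qed

lemma pd_fun: "pd i f = (\<lambda>y. frechet_derivative f (at y) (ev i))"
  by (simp add: pd_def fun_eq_iff)

lemma pd_sym:
  fixes f :: "real \<times> real \<Rightarrow> 'b::real_inner"
  assumes S: "open S" "x \<in> S" and fd: "\<And>y. y \<in> S \<Longrightarrow> f differentiable at y"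
    and d0: "pd 0 f differentiable at x" and d1: "pd 1 f differentiable at x"
  shows "pd 1 (pd 0 f) x = pd 0 (pd 1 f) x"
proof -
  obtain r where r: "r > 0" "ball x r \<subseteq> S" using S open_contains_ball by blast
  have fdb: "\<And>y. y \<in> ball x r \<Longrightarrow> f differentiable at y" using r fd by blast
  define A0 where "A0 = frechet_derivative (pd 0 f) (at x)"
  define A1 where "A1 = frechet_derivative (pd 1 f) (at x)"
  have a0: "((\<lambda>y. frechet_derivative f (at y) (ev 0)) has_derivative A0) (at x)"
    using fd_works[OF d0] unfolding A0_def pd_fun by simp
  have a1: "((\<lambda>y. frechet_derivative f (at y) (ev 1)) has_derivative A1) (at x)"
    using fd_works[OF d1] unfolding A1_def pd_fun by simp
  define c1 where "c1 = A0 (ev 1)"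
  define c2 where "c2 = A1 (ev 0)"
  have c1: "c1 = pd 1 (pd 0 f) x" unfolding c1_def A0_def pd_def[of 1] ..
  have c2: "c2 = pd 0 (pd 1 f) x" unfolding c2_def A1_def pd_def[of 0] ..
  have ne: "norm (c1 - c2) \<le> e" if e: "e > 0" for e
  proof -
    obtain da where da: "da > 0" "\<forall>t. 0 < t \<and> t < da \<longrightarrow>
      norm (f (x + t *\<^sub>R ev 0 + t *\<^sub>R ev 1) - f (x + t *\<^sub>R ev 0) - f (x + t *\<^sub>R ev 1) + f x - (t * t) *\<^sub>R c1) \<le> e/2 * (t * t)"
      using schwarz_aux[OF r(1) fdb a0, of "e/2" "ev 1"] e unfolding c1_def by auto
    obtain db where db: "db > 0" "\<forall>t. 0 < t \<and> t < db \<longrightarrow>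
      norm (f (x + t *\<^sub>R ev 1 + t *\<^sub>R ev 0) - f (x + t *\<^sub>R ev 1) - f (x + t *\<^sub>R ev 0) + f x - (t * t) *\<^sub>R c2) \<le> e/2 * (t * t)"
      using schwarz_aux[OF r(1) fdb a1, of "e/2" "ev 0"] e unfolding c2_def by auto
    define t where "t = min da db / 2"
    have t: "0 < t" "t < da" "t < db" unfolding t_def using da db by auto
    define Q where "Q = f (x + t *\<^sub>R ev 0 + t *\<^sub>R ev 1) - f (x + t *\<^sub>R ev 0) - f (x + t *\<^sub>R ev 1) + f x"
    have q1: "norm (Q - (t * t) *\<^sub>R c1) \<le> e/2 * (t * t)" using da t unfolding Q_def by auto
    have sw: "x + t *\<^sub>R ev 1 + t *\<^sub>R ev 0 = x + t *\<^sub>R ev 0 + t *\<^sub>R ev 1" by (simp add: add_ac)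
    have q2: "norm (Q - (t * t) *\<^sub>R c2) \<le> e/2 * (t * t)"
    proof -
      have "norm (f (x + t *\<^sub>R ev 1 + t *\<^sub>R ev 0) - f (x + t *\<^sub>R ev 1) - f (x + t *\<^sub>R ev 0) + f x - (t * t) *\<^sub>R c2) \<le> e/2 * (t * t)"
        using db t by auto
      moreover have "f (x + t *\<^sub>R ev 1 + t *\<^sub>R ev 0) - f (x + t *\<^sub>R ev 1) - f (x + t *\<^sub>R ev 0) + f x = Q"
        unfolding Q_def sw by (simp add: algebra_simps)
      ultimately show ?thesis by simp
    qed
    have eq1: "(t * t) *\<^sub>R (c1 - c2) = (Q - (t * t) *\<^sub>R c2) - (Q - (t * t) *\<^sub>R c1)"
      by (simp add: scaleR_diff_right)
    have "(t * t) * norm (c1 - c2) = norm ((t * t) *\<^sub>R (c1 - c2))" using t by simp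
    also have "\<dots> \<le> norm (Q - (t * t) *\<^sub>R c2) + norm (Q - (t * t) *\<^sub>R c1)" unfolding eq1 by (rule norm_triangle_ineq4)
    also have "\<dots> \<le> (t * t) * e" using q1 q2 by (simp add: algebra_simps)
    finally have "(t * t) * norm (c1 - c2) \<le> (t * t) * e" .
    then show ?thesis using t by (simp add: mult_le_cancel_left_pos)
  qed
  have "c1 = c2"
  proof (rule ccontr)
    assume "c1 \<noteq> c2"
    then have "norm (c1 - c2) > 0" by simp
    from ne[of "norm (c1 - c2) / 2"] this show False by simp
  qed
  then show ?thesis using c1 c2 by simp
qed



lemma Ck3D:
  assumes "Ck 3 f S" "open S" "y \<in> S"
  shows "f differentiable at y"
    "(\<lambda>x. frechet_derivative f (at x) v) differentiable at y"
    "(\<lambda>x. frechet_derivative (\<lambda>x. frechet_derivative f (at x) v) (at x) w) differentiable at y"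
  using assms by (auto simp: numeral_3_eq_3 differentiable_on_eq_differentiable_at)

lemma bb_cross: "bounded_bilinear cross3"
  using bilinear_cross bilinear_conv_bounded_bilinear by blast

lemma gram3:
  fixes u v a b :: "real^3"
  shows "(u \<bullet> u * (v \<bullet> v) - (u \<bullet> v) * (v \<bullet> u)) * (a \<bullet> b)
    = v \<bullet> v * (a \<bullet> u) * (b \<bullet> u) - (v \<bullet> u) * (a \<bullet> u) * (b \<bullet> v) - (u \<bullet> v) * (a \<bullet> v) * (b \<bullet> u)
      + u \<bullet> u * (a \<bullet> v) * (b \<bullet> v) + (a \<bullet> cross3 u v) * (b \<bullet> cross3 u v)"
  unfolding cross3_def inner_vec_def sum_3 vector_3 by (simp add: algebra_simps)

lemma normcross: "(norm (cross3 u v))^2 = u \<bullet> u * (v \<bullet> v) - (u \<bullet> v) * (v \<bullet> u)"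
  unfolding power2_norm_eq_inner cross3_def inner_vec_def sum_3 vector_3 by (simp add: algebra_simps)

lemma pd_ne0: "i \<noteq> 0 \<Longrightarrow> pd i f = pd 1 f"
  by (simp add: pd_def ev_def fun_eq_iff)

lemma fd_inverse: "(r::real) \<noteq> 0 \<Longrightarrow> frechet_derivative inverse (at r) h = - (inverse r * h * inverse r)"
  using frechet_derivative_at[OF has_derivative_inverse'[of r UNIV]] by metis

lemma fd_norm: "(z::'a::real_inner) \<noteq> 0 \<Longrightarrow> frechet_derivative norm (at z) h = h \<bullet> sgn z"
  using frechet_derivative_at[OF has_derivative_norm[of z]] by metis

locale surf =
  fixes X :: "real \<times> real \<Rightarrow> real^3" and U :: "(real \<times> real) set" and \<gamma> :: "real^3 \<Rightarrow> real"
  assumes U: "open U" and CX: "Ck 3 X U"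
    and reg: "\<forall>x\<in>U. cross3 (pd 0 X x) (pd 1 X x) \<noteq> 0"
    and CF: "Ck 3 (gext \<gamma>) (- {0})"
begin

definition N where "N y = cross3 (pd 0 X y) (pd 1 X y)"
definition c where "c y = inverse (norm (N y))"

lemma c_fun: "c = (\<lambda>y. inverse (norm (N y)))" by (simp add: fun_eq_iff c_def)

lemma dX: "y \<in> U \<Longrightarrow> X differentiable at y" using Ck3D(1)[OF CX U] .
lemma dX1: "y \<in> U \<Longrightarrow> pd i X differentiable at y" unfolding pd_fun using Ck3D(2)[OF CX U] .
lemma dX2: "y \<in> U \<Longrightarrow> pd j (pd i X) differentiable at y" unfolding pd_fun using Ck3D(3)[OF CX U] .

lemma Xsym: "y \<in> U \<Longrightarrow> pd j (pd i X) y = pd i (pd j X) y"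
proof -
  assume y: "y \<in> U"
  have s: "pd 1 (pd 0 X) y = pd 0 (pd 1 X) y" by (rule pd_sym[OF U y dX dX1 dX1]) (use y in auto)
  show ?thesis
  proof (cases "i = 0"; cases "j = 0")
    assume a: "i \<noteq> 0" "j \<noteq> 0" then show ?thesis by (simp only: pd_ne0[OF a(1)] pd_ne0[OF a(2)])
  next
    assume "i = 0" "j \<noteq> 0" then show ?thesis by (simp only: pd_ne0[OF \<open>j \<noteq> 0\<close>] s)
  next
    assume "i \<noteq> 0" "j = 0" then show ?thesis by (simp only: pd_ne0[OF \<open>i \<noteq> 0\<close>] s)
  qed simp
qed

lemma Nne: "y \<in> U \<Longrightarrow> N y \<noteq> 0" using reg by (simp add: N_def)

lemma dN: "y \<in> U \<Longrightarrow> N differentiable at y"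
  unfolding N_def[abs_def] by (rule diff_bil[OF bb_cross dX1 dX1])

lemma pdN: "y \<in> U \<Longrightarrow> pd i N y = cross3 (pd i (pd 0 X) y) (pd 1 X y) + cross3 (pd 0 X y) (pd i (pd 1 X) y)"
  unfolding N_def[abs_def] by (rule pd_bil[OF bb_cross dX1 dX1])

lemma dpdN: "y \<in> U \<Longrightarrow> pd i N differentiable at y"
  apply (rule diff_local[OF U _ pdN[symmetric]], assumption, assumption)
  by (intro differentiable_add diff_bil[OF bb_cross] dX1 dX2)

lemma nu_fun: "nrm X = (\<lambda>y. c y *\<^sub>R N y)"
  by (simp add: fun_eq_iff nrm_def c_def N_def divide_inverse)

lemma dnorm: "y \<in> U \<Longrightarrow> (\<lambda>y. norm (N y)) differentiable at y"
  by (rule diff_compose[OF dN differentiable_norm_at[OF Nne]])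

lemma dc: "y \<in> U \<Longrightarrow> c differentiable at y"
  unfolding c_def[abs_def] using differentiable_inverse[OF dnorm] Nne by simp

lemma pdc: "y \<in> U \<Longrightarrow> pd i c y = - (c y * (pd i N y \<bullet> (c y *\<^sub>R N y)) * c y)"
proof -
  assume y: "y \<in> U"
  have "pd i c y = frechet_derivative inverse (at (norm (N y))) (pd i (\<lambda>y. norm (N y)) y)"
    unfolding c_fun by (rule pd_compose[OF dnorm[OF y]]) (use Nne[OF y] in \<open>auto intro: differentiable_inverse\<close>)
  also have "pd i (\<lambda>y. norm (N y)) y = pd i N y \<bullet> sgn (N y)"
    by (subst pd_compose[OF dN[OF y] differentiable_norm_at[OF Nne[OF y]]]) (simp add: fd_norm Nne[OF y])
  finally show ?thesis using Nne[OF y]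
    by (simp add: fd_inverse sgn_div_norm c_fun)
qed

lemma dpdc: "y \<in> U \<Longrightarrow> pd i c differentiable at y"
  apply (rule diff_local[OF U _ pdc[symmetric]], assumption, assumption)
  by (intro differentiable_minus diff_bil[OF bounded_bilinear_mult] diff_bil[OF bounded_bilinear_inner]
      diff_bil[OF bounded_bilinear_scaleR] dc dN dpdN)

lemma dnu: "y \<in> U \<Longrightarrow> nrm X differentiable at y"
  unfolding nu_fun by (rule diff_bil[OF bounded_bilinear_scaleR dc dN])

lemma pdnu: "y \<in> U \<Longrightarrow> pd i (nrm X) y = pd i c y *\<^sub>R N y + c y *\<^sub>R pd i N y"
  unfolding nu_fun by (rule pd_bil[OF bounded_bilinear_scaleR dc dN])

lemma dpdnu: "y \<in> U \<Longrightarrow> pd i (nrm X) differentiable at y"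
  apply (rule diff_local[OF U _ pdnu[symmetric]], assumption, assumption)
  by (intro differentiable_add diff_bil[OF bounded_bilinear_scaleR] dc dN dpdN dpdc)

lemma nu_unit: "y \<in> U \<Longrightarrow> nrm X y \<bullet> nrm X y = 1"
proof -
  assume y: "y \<in> U"
  have n: "norm (N y) \<noteq> 0" using Nne[OF y] by simp
  have "N y \<bullet> N y = (norm (N y))^2" by (simp add: dot_square_norm)
  then show ?thesis using n by (simp add: nu_fun c_def power2_eq_square field_simps)
qed

lemma nu_X: "nrm X y \<bullet> pd i X y = 0"
proof (cases "i = 0")
  case False then show ?thesis by (simp only: pd_ne0[OF False]) (simp add: nu_fun N_def dot_cross_self)
qed (simp add: nu_fun N_def dot_cross_self)

lemma nu_nu_i: "y \<in> U \<Longrightarrow> pd i (nrm X) y \<bullet> nrm X y = 0"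
proof -
  assume y: "y \<in> U"
  have "pd i (\<lambda>y. nrm X y \<bullet> nrm X y) y = 0" by (rule pd_zero_const[OF U y nu_unit])
  then show ?thesis
    by (simp add: pd_bil[OF bounded_bilinear_inner dnu[OF y] dnu[OF y]] inner_commute)
qed

lemma nu_i_X: "y \<in> U \<Longrightarrow> pd i (nrm X) y \<bullet> pd j X y = - (nrm X y \<bullet> pd i (pd j X) y)"
proof -
  assume y: "y \<in> U"
  have "pd i (\<lambda>y. nrm X y \<bullet> pd j X y) y = 0" by (rule pd_zero_const[OF U y]) (rule nu_X)
  then show ?thesis
    by (simp add: pd_bil[OF bounded_bilinear_inner dnu[OF y] dX1[OF y]] eq_neg_iff_add_eq_0)
qed

lemma gdet_eq: "gdet X y = (norm (N y))^2"
  by (simp add: gdet_def gmet_def N_def normcross)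

lemma gdet_ne: "y \<in> U \<Longrightarrow> gdet X y \<noteq> 0"
  using Nne by (simp add: gdet_eq)

lemma complete_alg:
  fixes D ab vv vu uv uu au bu av bv aN bN :: real
  assumes "uv = vu" "D \<noteq> 0" "D * ab = vv * au * bu - vu * au * bv - uv * av * bu + uu * av * bv + aN * bN"
  shows "ab = vv / D * au * bu + (- uv / D) * au * bv + (- vu / D) * av * bu + uu / D * av * bv + aN * bN / D"
proof -
  have eq: "ab = (vv * au * bu - vu * au * bv - uv * av * bu + uu * av * bv + aN * bN) / D"
    using assms(2,3) by (simp add: eq_divide_eq mult.commute)
  show ?thesis unfolding eq assms(1) using assms(2) by (simp add: field_simps)
qed

lemma complete: "y \<in> U \<Longrightarrow> a \<bullet> b = (\<Sum>k<2. \<Sum>l<2. ginv X k l y * (a \<bullet> pd k X y) * (b \<bullet> pd l X y))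
       + (a \<bullet> nrm X y) * (b \<bullet> nrm X y)"
proof -
  assume y: "y \<in> U"
  define u where "u = pd 0 X y"
  define v where "v = pd 1 X y"
  define D where "D = gdet X y"
  have D: "D \<noteq> 0" using gdet_ne[OF y] by (simp add: D_def)
  have Dn: "(norm (N y))^2 = D" by (simp add: D_def gdet_eq)
  have g: "D * (a \<bullet> b) = v \<bullet> v * (a \<bullet> u) * (b \<bullet> u) - (v \<bullet> u) * (a \<bullet> u) * (b \<bullet> v) - (u \<bullet> v) * (a \<bullet> v) * (b \<bullet> u)
      + u \<bullet> u * (a \<bullet> v) * (b \<bullet> v) + (a \<bullet> N y) * (b \<bullet> N y)"
    unfolding D_def gdet_def gmet_def u_def v_def N_def using gram3 by simp
  have nn: "(a \<bullet> nrm X y) * (b \<bullet> nrm X y) = (a \<bullet> N y) * (b \<bullet> N y) / D"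
  proof -
    have "(a \<bullet> nrm X y) * (b \<bullet> nrm X y) = (c y * c y) * ((a \<bullet> N y) * (b \<bullet> N y))"
      by (simp add: nu_fun algebra_simps)
    also have "c y * c y = 1 / D" using Dn by (simp add: c_def power2_eq_square field_simps)
    finally show ?thesis by simp
  qed
  have gi: "ginv X 0 0 y = v \<bullet> v / D" "ginv X 0 1 y = - (u \<bullet> v) / D"
    "ginv X 1 0 y = - (v \<bullet> u) / D" "ginv X 1 1 y = u \<bullet> u / D"
    by (simp_all add: ginv_def gmet_def D_def u_def v_def)
  show ?thesis
    unfolding sum2 nn gi u_def[symmetric] v_def[symmetric]
    using complete_alg[OF inner_commute D g] by (simp add: algebra_simps)
qed

lemma vec_eq3:
  assumes y: "y \<in> U" and "a \<bullet> pd 0 X y = b \<bullet> pd 0 X y" "a \<bullet> pd 1 X y = b \<bullet> pd 1 X y" "a \<bullet> nrm X y = b \<bullet> nrm X y"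
  shows "a = b"
proof -
  have "(a - b) \<bullet> (a - b) = 0"
    using assms(2-4) by (subst complete[OF y]) (simp add: sum2 inner_diff_left)
  then show ?thesis by simp
qed

end



lemma grad3_axis: "grad3 f z \<bullet> axis k 1 = frechet_derivative f (at z) (axis k 1)"
  by (simp add: grad3_def inner_axis)

lemma Basis3: "b \<in> (Basis :: (real^3) set) \<Longrightarrow> \<exists>k. b = axis k 1"
  by (auto simp: Basis_vec_def)

lemma grad3_basis: "b \<in> Basis \<Longrightarrow> grad3 f z \<bullet> b = frechet_derivative f (at z) b"
  using Basis3 grad3_axis by metis

lemma lin_expand3: "linear L \<Longrightarrow> L w = (\<Sum>b\<in>Basis. (w \<bullet> b) *\<^sub>R L (b::real^3))"
proof -
  assume l: "linear L"
  have "L w = L (\<Sum>b\<in>Basis. (w \<bullet> b) *\<^sub>R b)" by (simp add: euclidean_representation)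
  also have "\<dots> = (\<Sum>b\<in>Basis. (w \<bullet> b) *\<^sub>R L b)" by (simp add: linear_sum[OF l] linear_scale[OF l])
  finally show ?thesis .
qed

lemma gext_hom: "t > 0 \<Longrightarrow> gext \<gamma> (t *\<^sub>R z) = t * gext \<gamma> z"
proof -
  assume t: "t > 0"
  have n: "norm (t *\<^sub>R z) = t * norm z" using t by simp
  have k: "(1 / (t * norm z)) * t = 1 / norm z" using t by simp
  have v: "(1 / norm (t *\<^sub>R z)) *\<^sub>R (t *\<^sub>R z) = (1 / norm z) *\<^sub>R z"
    unfolding n scaleR_scaleR k ..
  show ?thesis unfolding gext_def v n by simp
qed

context surf begin

lemma openC: "open (- {0::real^3})" by auto

lemma dF: "z \<noteq> 0 \<Longrightarrow> gext \<gamma> differentiable at z"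
  using Ck3D(1)[OF CF openC] by simp
lemma dF1: "z \<noteq> 0 \<Longrightarrow> (\<lambda>z. frechet_derivative (gext \<gamma>) (at z) v) differentiable at z"
  using Ck3D(2)[OF CF openC] by simp
lemma dF2: "z \<noteq> 0 \<Longrightarrow> (\<lambda>z. frechet_derivative (\<lambda>z. frechet_derivative (gext \<gamma>) (at z) v) (at z) w) differentiable at z"
  using Ck3D(3)[OF CF openC] by simp

lemma Gb: "b \<in> Basis \<Longrightarrow> (\<lambda>z. grad3 (gext \<gamma>) z \<bullet> b) = (\<lambda>z. frechet_derivative (gext \<gamma>) (at z) b)"
  using grad3_basis by auto

lemma dG: "z \<noteq> 0 \<Longrightarrow> grad3 (gext \<gamma>) differentiable at z"
proof (rule iffD2[OF differentiable_componentwise_within], intro ballI)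
  fix b :: "real^3" assume z: "z \<noteq> 0" and b: "b \<in> Basis"
  show "(\<lambda>x. grad3 (gext \<gamma>) x \<bullet> b) differentiable at z" unfolding Gb[OF b] by (rule dF1[OF z])
qed

lemma fdF: "z \<noteq> 0 \<Longrightarrow> frechet_derivative (gext \<gamma>) (at z) w = grad3 (gext \<gamma>) z \<bullet> w"
proof -
  assume z: "z \<noteq> 0"
  have "frechet_derivative (gext \<gamma>) (at z) w = (\<Sum>b\<in>Basis. (w \<bullet> b) *\<^sub>R frechet_derivative (gext \<gamma>) (at z) b)"
    by (rule lin_expand3[OF fd_linear[OF dF[OF z]]])
  also have "\<dots> = (\<Sum>b\<in>Basis. (w \<bullet> b) * (grad3 (gext \<gamma>) z \<bullet> b))"
    by (intro sum.cong refl) (simp add: grad3_basis)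
  also have "\<dots> = grad3 (gext \<gamma>) z \<bullet> w"
    by (subst euclidean_inner[of "grad3 (gext \<gamma>) z" w]) (simp add: mult.commute)
  finally show ?thesis .
qed

lemma fdG_comp: "z \<noteq> 0 \<Longrightarrow> frechet_derivative (grad3 (gext \<gamma>)) (at z) e \<bullet> b
     = frechet_derivative (\<lambda>z. grad3 (gext \<gamma>) z \<bullet> b) (at z) e"
  using frechet_derivative_at[OF has_derivative_inner_left[OF fd_works[OF dG], of z b]] by metis

lemma dG1: "z \<noteq> 0 \<Longrightarrow> (\<lambda>z. frechet_derivative (grad3 (gext \<gamma>)) (at z) e) differentiable at z"
proof -
  assume z: "z \<noteq> 0"
  show ?thesis
  proof (rule iffD2[OF differentiable_componentwise_within], intro ballI)
    fix b :: "real^3" assume b: "b \<in> Basis"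
    show "(\<lambda>x. frechet_derivative (grad3 (gext \<gamma>)) (at x) e \<bullet> b) differentiable at z within UNIV"
      using diff_local[OF openC _ _ dF2[OF z, of b e], of "\<lambda>x. frechet_derivative (grad3 (gext \<gamma>)) (at x) e \<bullet> b"] z
      by (simp add: fdG_comp Gb[OF b])
  qed
qed

lemma euler: "z \<noteq> 0 \<Longrightarrow> grad3 (gext \<gamma>) z \<bullet> z = gext \<gamma> z"
proof -
  assume z: "z \<noteq> 0"
  have i: "((\<lambda>t::real. t *\<^sub>R z) has_derivative (\<lambda>h. h *\<^sub>R z)) (at 1)"
    by (auto intro!: derivative_eq_intros)
  have c: "((\<lambda>t. gext \<gamma> (t *\<^sub>R z)) has_derivative (\<lambda>h. frechet_derivative (gext \<gamma>) (at z) (h *\<^sub>R z))) (at 1)"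
    using diff_chain_at[OF i, of "gext \<gamma>"] fd_works[OF dF[OF z]] by (simp add: o_def)
  have c2: "((\<lambda>t. gext \<gamma> (t *\<^sub>R z)) has_derivative (\<lambda>h. h * gext \<gamma> z)) (at 1)"
  proof (rule has_derivative_transform_within_open[of "\<lambda>t. t * gext \<gamma> z" _ _ _ "{0<..}"])
    show "((\<lambda>t. t * gext \<gamma> z) has_derivative (\<lambda>h. h * gext \<gamma> z)) (at 1)"
      by (auto intro!: derivative_eq_intros)
  qed (auto simp: gext_hom)
  have "(\<lambda>h. frechet_derivative (gext \<gamma>) (at z) (h *\<^sub>R z)) = (\<lambda>h. h * gext \<gamma> z)"
    using has_derivative_unique[OF c c2] .
  from fun_cong[OF this, of 1] show ?thesis using fdF[OF z] by simp
qed

lemma F_unit: "norm z = 1 \<Longrightarrow> gext \<gamma> z = \<gamma> z"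
  by (simp add: gext_def)

lemma nu_norm: "y \<in> U \<Longrightarrow> norm (nrm X y) = 1"
  using nu_unit[of y] by (simp add: norm_eq_sqrt_inner)

lemma nu_ne: "y \<in> U \<Longrightarrow> nrm X y \<noteq> 0"
  using nu_norm[of y] by auto

lemma xi_fun: "cahn_hoffman \<gamma> X = (\<lambda>y. grad3 (gext \<gamma>) (nrm X y))"
  by (simp add: fun_eq_iff cahn_hoffman_def)

lemma Amap_fun: "Amap \<gamma> n = frechet_derivative (grad3 (gext \<gamma>)) (at n)"
  by (simp add: fun_eq_iff Amap_def)

lemma Amap_lin: "n \<noteq> 0 \<Longrightarrow> linear (Amap \<gamma> n)"
  unfolding Amap_fun by (rule fd_linear[OF dG])

lemma dxi: "y \<in> U \<Longrightarrow> cahn_hoffman \<gamma> X differentiable at y"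
  unfolding xi_fun by (rule diff_compose[OF dnu dG[OF nu_ne]])

lemma pdxi: "y \<in> U \<Longrightarrow> pd m (cahn_hoffman \<gamma> X) y = Amap \<gamma> (nrm X y) (pd m (nrm X) y)"
  unfolding xi_fun Amap_fun by (rule pd_compose[OF dnu dG[OF nu_ne]])

lemma dpdxi: "y \<in> U \<Longrightarrow> pd m (cahn_hoffman \<gamma> X) differentiable at y"
proof -
  assume y: "y \<in> U"
  have eq: "(\<Sum>b\<in>Basis. (pd m (nrm X) y' \<bullet> b) *\<^sub>R frechet_derivative (grad3 (gext \<gamma>)) (at (nrm X y')) b)
      = pd m (cahn_hoffman \<gamma> X) y'" if "y' \<in> U" for y'
  proof -
    have "pd m (cahn_hoffman \<gamma> X) y' = Amap \<gamma> (nrm X y') (pd m (nrm X) y')" by (rule pdxi[OF that])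
    also have "\<dots> = (\<Sum>b\<in>Basis. (pd m (nrm X) y' \<bullet> b) *\<^sub>R Amap \<gamma> (nrm X y') b)"
      by (rule lin_expand3[OF Amap_lin[OF nu_ne[OF that]]])
    finally show ?thesis unfolding Amap_fun by simp
  qed
  show ?thesis
    apply (rule diff_local[OF U y eq], assumption)
    apply (rule differentiable_sum[OF finite_Basis])
    apply (rule ballI)
    apply (rule diff_bil[OF bounded_bilinear_scaleR])
     apply (rule diff_bil[OF bounded_bilinear_inner dpdnu[OF y] differentiable_const])
    apply (rule diff_compose[OF dnu[OF y] dG1[OF nu_ne[OF y]]])
    done
qed

lemma xisym: "y \<in> U \<Longrightarrow> pd j (pd i (cahn_hoffman \<gamma> X)) y = pd i (pd j (cahn_hoffman \<gamma> X)) y"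
proof -
  assume y: "y \<in> U"
  have s: "pd 1 (pd 0 (cahn_hoffman \<gamma> X)) y = pd 0 (pd 1 (cahn_hoffman \<gamma> X)) y"
    by (rule pd_sym[OF U y dxi dpdxi dpdxi]) (use y in auto)
  show ?thesis
  proof (cases "i = 0"; cases "j = 0")
    assume a: "i \<noteq> 0" "j \<noteq> 0" then show ?thesis by (simp only: pd_ne0[OF a(1)] pd_ne0[OF a(2)])
  next
    assume "i = 0" "j \<noteq> 0" then show ?thesis by (simp only: pd_ne0[OF \<open>j \<noteq> 0\<close>] s)
  next
    assume "i \<noteq> 0" "j = 0" then show ?thesis by (simp only: pd_ne0[OF \<open>i \<noteq> 0\<close>] s)
  qed simp
qed

lemma xi_nu: "y \<in> U \<Longrightarrow> cahn_hoffman \<gamma> X y \<bullet> nrm X y = \<gamma> (nrm X y)"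
  using euler[OF nu_ne] F_unit[OF nu_norm] by (simp add: cahn_hoffman_def)

lemma dpsiF: "y \<in> U \<Longrightarrow> (\<lambda>y. gext \<gamma> (nrm X y)) differentiable at y"
  by (rule diff_compose[OF dnu dF[OF nu_ne]])

lemma dpsi: "y \<in> U \<Longrightarrow> (\<lambda>y. \<gamma> (nrm X y)) differentiable at y"
  by (rule diff_local[OF U _ _ dpsiF]) (auto simp: F_unit nu_norm)

lemma pdpsi: "y \<in> U \<Longrightarrow> pd j (\<lambda>y. \<gamma> (nrm X y)) y = cahn_hoffman \<gamma> X y \<bullet> pd j (nrm X) y"
proof -
  assume y: "y \<in> U"
  have "pd j (\<lambda>y. gext \<gamma> (nrm X y)) y = pd j (\<lambda>y. \<gamma> (nrm X y)) y"
    by (rule pd_local[OF U y _ dpsiF[OF y]]) (simp add: F_unit nu_norm)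
  moreover have "pd j (\<lambda>y. gext \<gamma> (nrm X y)) y = cahn_hoffman \<gamma> X y \<bullet> pd j (nrm X) y"
    by (simp add: pd_compose[OF dnu[OF y] dF[OF nu_ne[OF y]]] fdF[OF nu_ne[OF y]] cahn_hoffman_def)
  ultimately show ?thesis by simp
qed

lemma xi_i_nu: "y \<in> U \<Longrightarrow> pd i (cahn_hoffman \<gamma> X) y \<bullet> nrm X y = 0"
proof -
  assume y: "y \<in> U"
  have "pd i (\<lambda>y. cahn_hoffman \<gamma> X y \<bullet> nrm X y) y = pd i (\<lambda>y. \<gamma> (nrm X y)) y"
    by (rule pd_local[OF U y xi_nu], assumption, rule diff_bil[OF bounded_bilinear_inner dxi[OF y] dnu[OF y]])
  then show ?thesis
    by (simp add: pd_bil[OF bounded_bilinear_inner dxi[OF y] dnu[OF y]] pdpsi[OF y])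
qed

end



lemma pd_div:
  fixes f g :: "real \<times> real \<Rightarrow> real"
  assumes f: "f differentiable at x" and g: "g differentiable at x" and gx: "g x \<noteq> 0"
  shows "pd i (\<lambda>y. f y / g y) x = (pd i f x * g x - f x * pd i g x) / (g x)^2"
proof -
  have di: "inverse differentiable at (g x)"
    using has_derivative_inverse'[OF gx] unfolding differentiable_def by blast
  have dg: "(\<lambda>y. inverse (g y)) differentiable at x" by (rule diff_compose[OF g di])
  have "pd i (\<lambda>y. f y / g y) x = pd i (\<lambda>y. f y * inverse (g y)) x" by (simp add: divide_inverse)
  also have "\<dots> = pd i f x * inverse (g x) + f x * pd i (\<lambda>y. inverse (g y)) x"
    by (rule pd_bil[OF bounded_bilinear_mult f dg])
  also have "pd i (\<lambda>y. inverse (g y)) x = - (inverse (g x) * pd i g x * inverse (g x))"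
    by (simp add: pd_compose[OF g di] fd_inverse[OF gx])
  finally show ?thesis using gx by (simp add: field_simps power2_eq_square)
qed

lemma diff_div:
  fixes f g :: "real \<times> real \<Rightarrow> real"
  assumes f: "f differentiable at x" and g: "g differentiable at x" and gx: "g x \<noteq> 0"
  shows "(\<lambda>y. f y / g y) differentiable at x"
proof -
  have di: "inverse differentiable at (g x)"
    using has_derivative_inverse'[OF gx] unfolding differentiable_def by blast
  have dg: "(\<lambda>y. inverse (g y)) differentiable at x" by (rule diff_compose[OF g di])
  show ?thesis unfolding divide_inverse by (rule diff_bil[OF bounded_bilinear_mult f dg])
qed

lemma dgi_alg:
  fixes g00 g01 g11 d00 d01 d11 :: real
  assumes nz: "g00 * g11 - g01 * g01 \<noteq> 0"
  defines "D \<equiv> g00 * g11 - g01 * g01" and "dD \<equiv> d00 * g11 + g00 * d11 - (d01 * g01 + g01 * d01)"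
  shows "(d11 * D - g11 * dD) / D^2 = - (g11/D * d00 * (g11/D) + g11/D * d01 * (- g01/D) + (- g01/D) * d01 * (g11/D) + (- g01/D) * d11 * (- g01/D))"
    and "((- d01) * D - (- g01) * dD) / D^2 = - (g11/D * d00 * (- g01/D) + g11/D * d01 * (g00/D) + (- g01/D) * d01 * (- g01/D) + (- g01/D) * d11 * (g00/D))"
    and "((- d01) * D - (- g01) * dD) / D^2 = - ((- g01/D) * d00 * (g11/D) + (- g01/D) * d01 * (- g01/D) + g00/D * d01 * (g11/D) + g00/D * d11 * (- g01/D))"
    and "(d00 * D - g00 * dD) / D^2 = - ((- g01/D) * d00 * (- g01/D) + (- g01/D) * d01 * (g00/D) + g00/D * d01 * (- g01/D) + g00/D * d11 * (g00/D))"
proof -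
  have Dnz: "D \<noteq> 0" using nz D_def by simp
  show "(d11 * D - g11 * dD) / D^2 = - (g11/D * d00 * (g11/D) + g11/D * d01 * (- g01/D) + (- g01/D) * d01 * (g11/D) + (- g01/D) * d11 * (- g01/D))"
    using Dnz by (simp add: field_simps power2_eq_square) (simp add: D_def dD_def algebra_simps)
  show "((- d01) * D - (- g01) * dD) / D^2 = - (g11/D * d00 * (- g01/D) + g11/D * d01 * (g00/D) + (- g01/D) * d01 * (- g01/D) + (- g01/D) * d11 * (g00/D))"
    using Dnz by (simp add: field_simps power2_eq_square) (simp add: D_def dD_def algebra_simps)
  show "((- d01) * D - (- g01) * dD) / D^2 = - ((- g01/D) * d00 * (g11/D) + (- g01/D) * d01 * (- g01/D) + g00/D * d01 * (g11/D) + g00/D * d11 * (- g01/D))"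
    using Dnz by (simp add: field_simps power2_eq_square) (simp add: D_def dD_def algebra_simps)
  show "(d00 * D - g00 * dD) / D^2 = - ((- g01/D) * d00 * (- g01/D) + (- g01/D) * d01 * (g00/D) + g00/D * d01 * (- g01/D) + g00/D * d11 * (g00/D))"
    using Dnz by (simp add: field_simps power2_eq_square) (simp add: D_def dD_def algebra_simps)
qed

lemma final_alg:
  fixes gi h P xiX2 xinu dt :: "nat \<Rightarrow> nat \<Rightarrow> real" and dgi Gm Q xiiX2 :: "nat \<Rightarrow> nat \<Rightarrow> nat \<Rightarrow> real"
    and t s :: "nat \<Rightarrow> real" and psi :: real
  assumes gs: "gi 1 0 = gi 0 1"
    and Gs: "\<And>c. Gm 1 0 c = Gm 0 1 c"
    and hs: "h 1 0 = h 0 1"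
    and dgi: "\<And>m a b. dgi m a b = - (\<Sum>c<2. \<Sum>d<2. gi a c * (Gm c m d + Gm d m c) * gi d b)"
    and xiX2: "\<And>p i. xiX2 p i = (\<Sum>k<2. \<Sum>l<2. gi k l * s k * Gm p i l) + psi * h p i"
    and xiiX2: "\<And>i j m. xiiX2 i j m = (\<Sum>k<2. \<Sum>l<2. gi k l * P i k * Gm j m l)"
    and xinu: "\<And>i j. xinu i j = - (\<Sum>k<2. \<Sum>l<2. gi k l * P i k * h l j)"
    and t: "\<And>m. t m = (\<Sum>p<2. gi m p * s p)"
    and dt: "\<And>m i. dt m i = (\<Sum>p<2. dgi i m p * s p + gi m p * (P i p + xiX2 p i))"
    and hyp: "\<And>m. (\<Sum>i<2. \<Sum>j<2. dgi m i j * P i j + gi i j * (Q i m j + xiiX2 i j m)) = 0"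
    and Qs: "\<And>m i j. Q m i j = Q i m j"
  shows "(\<Sum>i<2. \<Sum>j<2. gi i j * (\<Sum>m<2. dt m i * P m j + t m * Q m i j))
           + (\<Sum>i<2. \<Sum>j<2. gi i j * xinu i j) * psi
         = (\<Sum>i<2. \<Sum>j<2. gi i j * P i j)^2
           - 2 * ((\<Sum>j<2. gi 0 j * P 0 j) * (\<Sum>j<2. gi 1 j * P 1 j)
                  - (\<Sum>j<2. gi 0 j * P 1 j) * (\<Sum>j<2. gi 1 j * P 0 j))"
proof -
  define H where "H m = (\<Sum>i<2. \<Sum>j<2. dgi m i j * P i j + gi i j * (Q i m j + xiiX2 i j m))" for m
  define A1 where "A1 = (\<Sum>i<2. \<Sum>j<2. \<Sum>m<2. \<Sum>p<2. gi i j * dgi i m p * s p * P m j)"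
  define A2 where "A2 = (\<Sum>i<2. \<Sum>j<2. \<Sum>m<2. \<Sum>p<2. gi i j * gi m p * P i p * P m j)"
  define A3 where "A3 = (\<Sum>i<2. \<Sum>j<2. \<Sum>m<2. \<Sum>p<2. \<Sum>k<2. \<Sum>l<2. gi i j * gi m p * gi k l * s k * Gm p i l * P m j)"
  define A4 where "A4 = (\<Sum>i<2. \<Sum>j<2. \<Sum>m<2. \<Sum>p<2. gi i j * gi m p * psi * h p i * P m j)"
  define T2 where "T2 = (\<Sum>i<2. \<Sum>j<2. \<Sum>m<2. gi i j * t m * Q m i j)"
  define T3 where "T3 = (\<Sum>i<2. \<Sum>j<2. gi i j * xinu i j) * psi"
  define C where "C m = (\<Sum>i<2. \<Sum>j<2. dgi m i j * P i j + gi i j * xiiX2 i j m)" for m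
  have split: "(\<Sum>i<2. \<Sum>j<2. gi i j * (\<Sum>m<2. dt m i * P m j + t m * Q m i j))
           + (\<Sum>i<2. \<Sum>j<2. gi i j * xinu i j) * psi = A1 + A2 + A3 + A4 + T2 + T3"
    unfolding A1_def A2_def A3_def A4_def T2_def T3_def dt xiX2 sum2
    by (simp add: algebra_simps)
  have e1: "A1 + A3 = t 0 * C 0 + t 1 * C 1"
    unfolding A1_def A3_def C_def t dgi xiiX2 sum2 gs Gs by (simp add: algebra_simps)
  have e2: "A4 + T3 = 0"
    unfolding A4_def T3_def xinu sum2 gs hs by (simp add: algebra_simps)
  have e3: "T2 = t 0 * (H 0 - C 0) + t 1 * (H 1 - C 1)"
    unfolding T2_def H_def C_def sum2
    using Qs[of 0 1] Qs[of 1 0] by (simp add: algebra_simps)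
  have e4: "A2 = (\<Sum>i<2. \<Sum>j<2. gi i j * P i j)^2
           - 2 * ((\<Sum>j<2. gi 0 j * P 0 j) * (\<Sum>j<2. gi 1 j * P 1 j)
                  - (\<Sum>j<2. gi 0 j * P 1 j) * (\<Sum>j<2. gi 1 j * P 0 j))"
    unfolding A2_def sum2 gs by (simp add: algebra_simps power2_eq_square)
  have "H 0 = 0" "H 1 = 0" using hyp unfolding H_def by auto
  then show ?thesis using split e1 e2 e3 e4 by (simp add: algebra_simps)
qed

context surf begin

lemma gmet_fun: "gmet X a b = (\<lambda>y. pd a X y \<bullet> pd b X y)" by (simp add: fun_eq_iff gmet_def)

lemma gmet_sym: "gmet X b a = gmet X a b" by (simp add: gmet_fun inner_commute)

lemma dgmet: "y \<in> U \<Longrightarrow> gmet X a b differentiable at y"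
  unfolding gmet_fun by (rule diff_bil[OF bounded_bilinear_inner dX1 dX1])

lemma pdgmet: "y \<in> U \<Longrightarrow> pd m (gmet X a b) y = pd m (pd a X) y \<bullet> pd b X y + pd a X y \<bullet> pd m (pd b X) y"
  unfolding gmet_fun by (rule pd_bil[OF bounded_bilinear_inner dX1 dX1])

lemma gdet_fun: "gdet X = (\<lambda>y. gmet X 0 0 y * gmet X 1 1 y - gmet X 0 1 y * gmet X 1 0 y)"
  by (simp add: fun_eq_iff gdet_def)

lemma dgdet: "y \<in> U \<Longrightarrow> gdet X differentiable at y"
  unfolding gdet_fun
  by (rule differentiable_diff; rule diff_bil[OF bounded_bilinear_mult dgmet dgmet])

lemma pdgdet: "y \<in> U \<Longrightarrow> pd m (gdet X) y = pd m (gmet X 0 0) y * gmet X 1 1 y + gmet X 0 0 y * pd m (gmet X 1 1) y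
   - (pd m (gmet X 0 1) y * gmet X 1 0 y + gmet X 0 1 y * pd m (gmet X 1 0) y)"
  unfolding gdet_fun
  apply (subst pd_diff)
    apply (rule diff_bil[OF bounded_bilinear_mult dgmet dgmet], assumption, assumption)+
  apply (simp add: pd_bil[OF bounded_bilinear_mult dgmet dgmet])
  done

lemma ginv00: "ginv X 0 0 = (\<lambda>y. gmet X 1 1 y / gdet X y)" by (simp add: fun_eq_iff ginv_def)
lemma ginv01: "ginv X 0 1 = (\<lambda>y. - gmet X 0 1 y / gdet X y)" by (simp add: fun_eq_iff ginv_def)
lemma ginv10: "ginv X 1 0 = (\<lambda>y. - gmet X 0 1 y / gdet X y)" by (simp add: fun_eq_iff ginv_def gmet_sym)
lemma ginv11: "ginv X 1 1 = (\<lambda>y. gmet X 0 0 y / gdet X y)" by (simp add: fun_eq_iff ginv_def)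

lemma idx2: "(a::nat) < 2 \<Longrightarrow> a = 0 \<or> a = 1" by auto

lemma dginv: "y \<in> U \<Longrightarrow> a < 2 \<Longrightarrow> b < 2 \<Longrightarrow> ginv X a b differentiable at y"
  apply (drule idx2)+
  apply (elim disjE)
  by (simp_all only: ginv00 ginv01 ginv10 ginv11)
    (auto intro!: diff_div dgmet differentiable_minus dgdet gdet_ne)

lemma pdginv: "y \<in> U \<Longrightarrow> a < 2 \<Longrightarrow> b < 2 \<Longrightarrow>
   pd m (ginv X a b) y = - (\<Sum>c<2. \<Sum>d<2. ginv X a c y * pd m (gmet X c d) y * ginv X d b y)"
proof -
  assume y: "y \<in> U" and ab: "a < 2" "b < 2"
  define G00 where "G00 = gmet X 0 0 y"
  define G01 where "G01 = gmet X 0 1 y"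
  define G11 where "G11 = gmet X 1 1 y"
  define P00 where "P00 = pd m (gmet X 0 0) y"
  define P01 where "P01 = pd m (gmet X 0 1) y"
  define P11 where "P11 = pd m (gmet X 1 1) y"
  have g10: "gmet X 1 0 y = G01" unfolding G01_def gmet_sym[of 1 0] ..
  have p10: "pd m (gmet X 1 0) y = P01" unfolding P01_def gmet_sym[of 1 0] ..
  have gd: "gdet X y = G00 * G11 - G01 * G01" unfolding gdet_def G00_def[symmetric] G11_def[symmetric] G01_def[symmetric] g10 ..
  have nz: "G00 * G11 - G01 * G01 \<noteq> 0" using gdet_ne[OF y] gd by simp
  have pgd: "pd m (gdet X) y = P00 * G11 + G00 * P11 - (P01 * G01 + G01 * P01)"
    unfolding pdgdet[OF y] G00_def[symmetric] G11_def[symmetric] G01_def[symmetric] P00_def[symmetric] P01_def[symmetric] P11_def[symmetric] g10 p10 ..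
  have gi: "ginv X 0 0 y = G11 / (G00 * G11 - G01 * G01)" "ginv X 0 1 y = - G01 / (G00 * G11 - G01 * G01)"
    "ginv X 1 0 y = - G01 / (G00 * G11 - G01 * G01)" "ginv X 1 1 y = G00 / (G00 * G11 - G01 * G01)"
    unfolding ginv00 ginv01 ginv10 ginv11 gd G00_def[symmetric] G11_def[symmetric] G01_def[symmetric] by simp_all
  have mg: "\<And>num. num differentiable at y \<Longrightarrow> pd m (\<lambda>y. num y / gdet X y) y
      = (pd m num y * (G00 * G11 - G01 * G01) - num y * (P00 * G11 + G00 * P11 - (P01 * G01 + G01 * P01)))
        / (G00 * G11 - G01 * G01)^2"
    by (simp add: pd_div[OF _ dgdet[OF y] gdet_ne[OF y]] gd pgd)
  have m1: "pd m (\<lambda>y. - gmet X 0 1 y / gdet X y) y = ((- P01) * (G00 * G11 - G01 * G01) - (- G01) * (P00 * G11 + G00 * P11 - (P01 * G01 + G01 * P01)))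
        / (G00 * G11 - G01 * G01)^2"
    using mg[OF differentiable_minus[OF dgmet[OF y]]] by (simp add: pd_minus[OF dgmet[OF y]] P01_def G01_def)
  have m0: "pd m (\<lambda>y. gmet X 1 1 y / gdet X y) y = (P11 * (G00 * G11 - G01 * G01) - G11 * (P00 * G11 + G00 * P11 - (P01 * G01 + G01 * P01)))
        / (G00 * G11 - G01 * G01)^2"
    using mg[OF dgmet[OF y]] by (simp add: P11_def G11_def)
  have m3: "pd m (\<lambda>y. gmet X 0 0 y / gdet X y) y = (P00 * (G00 * G11 - G01 * G01) - G00 * (P00 * G11 + G00 * P11 - (P01 * G01 + G01 * P01)))
        / (G00 * G11 - G01 * G01)^2"
    using mg[OF dgmet[OF y]] by (simp add: P00_def G00_def)
  note A = dgi_alg[OF nz, where ?d00.0=P00 and ?d01.0=P01 and ?d11.0=P11]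
  from idx2[OF ab(1)] idx2[OF ab(2)] show ?thesis
  proof (elim disjE)
    assume ab': "a = 0" "b = 0" then show ?thesis
      unfolding ab' sum2 gi p10 unfolding ginv00 m0 P00_def[symmetric] P01_def[symmetric] P11_def[symmetric] using A(1) by (simp only: add.assoc)
  next
    assume ab': "a = 0" "b = 1" then show ?thesis
      unfolding ab' sum2 gi p10 unfolding ginv01 m1 P00_def[symmetric] P01_def[symmetric] P11_def[symmetric] using A(2) by (simp only: add.assoc)
  next
    assume ab': "a = 1" "b = 0" then show ?thesis
      unfolding ab' sum2 gi p10 unfolding ginv10 m1 P00_def[symmetric] P01_def[symmetric] P11_def[symmetric] using A(3) by (simp only: add.assoc)
  next
    assume ab': "a = 1" "b = 1" then show ?thesis
      unfolding ab' sum2 gi p10 unfolding ginv11 m3 P00_def[symmetric] P01_def[symmetric] P11_def[symmetric] using A(4) by (simp only: add.assoc)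
  qed
qed

lemma ginv_vals: "ginv X 0 0 y = gmet X 1 1 y / gdet X y" "ginv X 0 1 y = - gmet X 0 1 y / gdet X y"
   "ginv X 1 0 y = - gmet X 0 1 y / gdet X y" "ginv X 1 1 y = gmet X 0 0 y / gdet X y"
  unfolding ginv_def gmet_sym[of 1 0] by simp_all

lemma gdet_val: "gdet X y = gmet X 0 0 y * gmet X 1 1 y - gmet X 0 1 y * gmet X 0 1 y"
  unfolding gdet_def gmet_sym[of 1 0] ..

lemma XX: "pd a X y \<bullet> pd b X y = gmet X a b y" by (simp add: gmet_def)

lemma inv_alg:
  fixes D g00 g01 g11 a0 a1 :: real
  assumes "D = g00 * g11 - g01 * g01" "D \<noteq> 0"
  shows "(g11 / D * a0 + - g01 / D * a1) * g00 + (- g01 / D * a0 + g00 / D * a1) * g01 = a0"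
    and "(g11 / D * a0 + - g01 / D * a1) * g01 + (- g01 / D * a0 + g00 / D * a1) * g11 = a1"
  using assms(2) by (simp_all add: field_simps) (simp_all add: assms(1) algebra_simps)

lemma tangent_expand:
  assumes y: "y \<in> U" and an: "a \<bullet> nrm X y = 0"
  shows "a = (\<Sum>k<2. (\<Sum>l<2. ginv X k l y * (a \<bullet> pd l X y)) *\<^sub>R pd k X y)"
proof (rule vec_eq3[OF y])
  note gv = ginv_vals
  have D: "gdet X y = gmet X 0 0 y * gmet X 1 1 y - gmet X 0 1 y * gmet X 0 1 y" "gdet X y \<noteq> 0"
    using gdet_val gdet_ne[OF y] by auto
  note I = inv_alg[OF D, where ?a0.0 = "a \<bullet> pd 0 X y" and ?a1.0 = "a \<bullet> pd 1 X y"]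
  show "a \<bullet> pd 0 X y = (\<Sum>k<2. (\<Sum>l<2. ginv X k l y * (a \<bullet> pd l X y)) *\<^sub>R pd k X y) \<bullet> pd 0 X y"
    unfolding sum2 inner_add_left inner_scaleR_left XX gv gmet_sym[of 1 0] using I(1) by simp
  show "a \<bullet> pd 1 X y = (\<Sum>k<2. (\<Sum>l<2. ginv X k l y * (a \<bullet> pd l X y)) *\<^sub>R pd k X y) \<bullet> pd 1 X y"
    unfolding sum2 inner_add_left inner_scaleR_left XX gv gmet_sym[of 1 0] using I(2) by simp
  show "a \<bullet> nrm X y = (\<Sum>k<2. (\<Sum>l<2. ginv X k l y * (a \<bullet> pd l X y)) *\<^sub>R pd k X y) \<bullet> nrm X y"
    unfolding sum2 inner_add_left inner_scaleR_left using an nu_X by (simp add: inner_commute)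
qed

definition tt where "tt m y = (\<Sum>p<2. ginv X m p y * (cahn_hoffman \<gamma> X y \<bullet> pd p X y))"

lemma psi_q: "y \<in> U \<Longrightarrow> pd q (\<lambda>y. \<gamma> (nrm X y)) y
   = (\<Sum>k<2. (\<Sum>l<2. ginv X k l y * (- (nrm X y \<bullet> pd q (pd l X) y))) * (cahn_hoffman \<gamma> X y \<bullet> pd k X y))"
proof -
  assume y: "y \<in> U"
  have "pd q (\<lambda>y. \<gamma> (nrm X y)) y = cahn_hoffman \<gamma> X y \<bullet> pd q (nrm X) y" by (rule pdpsi[OF y])
  also have "pd q (nrm X) y = (\<Sum>k<2. (\<Sum>l<2. ginv X k l y * (pd q (nrm X) y \<bullet> pd l X y)) *\<^sub>R pd k X y)"
    by (rule tangent_expand[OF y nu_nu_i[OF y]])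
  finally show ?thesis
    by (simp add: inner_sum_right nu_i_X[OF y] mult.commute)
qed

lemma sgrad_eq: "y \<in> U \<Longrightarrow> sgrad X (\<lambda>y. \<gamma> (nrm X y)) y = (\<Sum>m<2. tt m y *\<^sub>R pd m (nrm X) y)"
proof -
  assume y: "y \<in> U"
  note gv = ginv_vals
  have D: "gdet X y = gmet X 0 0 y * gmet X 1 1 y - gmet X 0 1 y * gmet X 0 1 y" "gdet X y \<noteq> 0"
    using gdet_val gdet_ne[OF y] by auto
  define p0 where "p0 = pd 0 (\<lambda>y. \<gamma> (nrm X y)) y"
  define p1 where "p1 = pd 1 (\<lambda>y. \<gamma> (nrm X y)) y"
  note I = inv_alg[OF D, where ?a0.0 = p0 and ?a1.0 = p1]
  have s0: "sgrad X (\<lambda>y. \<gamma> (nrm X y)) y \<bullet> pd 0 X y = p0"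
    unfolding sgrad_def sum2 inner_add_left inner_scaleR_left XX gv gmet_sym[of 1 0]
      p0_def[symmetric] p1_def[symmetric] using D(2) by (simp add: field_simps) (simp add: D(1) algebra_simps)
  have s1: "sgrad X (\<lambda>y. \<gamma> (nrm X y)) y \<bullet> pd 1 X y = p1"
    unfolding sgrad_def sum2 inner_add_left inner_scaleR_left XX gv gmet_sym[of 1 0]
      p0_def[symmetric] p1_def[symmetric] using D(2) by (simp add: field_simps) (simp add: D(1) algebra_simps)
  have g10: "ginv X 1 0 y = ginv X 0 1 y" unfolding gv ..
  have sy: "nrm X y \<bullet> pd 0 (pd 1 X) y = nrm X y \<bullet> pd 1 (pd 0 X) y" unfolding Xsym[OF y, of 0 1] ..
  show ?thesis
  proof (rule vec_eq3[OF y])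
    show "sgrad X (\<lambda>y. \<gamma> (nrm X y)) y \<bullet> pd 0 X y = (\<Sum>m<2. tt m y *\<^sub>R pd m (nrm X) y) \<bullet> pd 0 X y"
      unfolding s0 p0_def psi_q[OF y] sum2 inner_add_left inner_scaleR_left nu_i_X[OF y] tt_def g10 sy
      by (simp add: algebra_simps)
    show "sgrad X (\<lambda>y. \<gamma> (nrm X y)) y \<bullet> pd 1 X y = (\<Sum>m<2. tt m y *\<^sub>R pd m (nrm X) y) \<bullet> pd 1 X y"
      unfolding s1 p1_def psi_q[OF y] sum2 inner_add_left inner_scaleR_left nu_i_X[OF y] tt_def g10 sy
      by (simp add: algebra_simps)
    show "sgrad X (\<lambda>y. \<gamma> (nrm X y)) y \<bullet> nrm X y = (\<Sum>m<2. tt m y *\<^sub>R pd m (nrm X) y) \<bullet> nrm X y"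
      unfolding sgrad_def sum2 inner_add_left inner_scaleR_left nu_nu_i[OF y]
      using nu_X by (simp add: inner_commute)
  qed
qed

lemma W_eq: "y \<in> U \<Longrightarrow> Amap \<gamma> (nrm X y) (sgrad X (\<lambda>y. \<gamma> (nrm X y)) y)
    = (\<Sum>m<2. tt m y *\<^sub>R pd m (cahn_hoffman \<gamma> X) y)"
proof -
  assume y: "y \<in> U"
  note l = Amap_lin[OF nu_ne[OF y]]
  show ?thesis unfolding sgrad_eq[OF y] sum2 linear_add[OF l] linear_scale[OF l] pdxi[OF y] ..
qed

lemma dtt: "y \<in> U \<Longrightarrow> m < 2 \<Longrightarrow> tt m differentiable at y"
  unfolding tt_def[abs_def]
  apply (rule differentiable_sum, simp)
  apply (rule ballI)
  apply (rule diff_bil[OF bounded_bilinear_mult dginv diff_bil[OF bounded_bilinear_inner dxi dX1]])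
  by auto

lemma pdtt: "y \<in> U \<Longrightarrow> m < 2 \<Longrightarrow> pd i (tt m) y = (\<Sum>p<2. pd i (ginv X m p) y * (cahn_hoffman \<gamma> X y \<bullet> pd p X y)
    + ginv X m p y * (pd i (cahn_hoffman \<gamma> X) y \<bullet> pd p X y + cahn_hoffman \<gamma> X y \<bullet> pd i (pd p X) y))"
proof -
  assume y: "y \<in> U" and m: "m < 2"
  have d: "\<And>p. p \<in> {..<2} \<Longrightarrow> (\<lambda>y. ginv X m p y * (cahn_hoffman \<gamma> X y \<bullet> pd p X y)) differentiable at y"
    using m by (auto intro!: diff_bil[OF bounded_bilinear_mult dginv diff_bil[OF bounded_bilinear_inner dxi dX1]] y)
  have "pd i (tt m) y = (\<Sum>p<2. pd i (\<lambda>y. ginv X m p y * (cahn_hoffman \<gamma> X y \<bullet> pd p X y)) y)"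
    unfolding tt_def[abs_def]
    by (rule pd_sum[where A="{..<2}" and f="\<lambda>p y. ginv X m p y * (cahn_hoffman \<gamma> X y \<bullet> pd p X y)" and x=y, OF _ d]) auto
  also have "\<dots> = (\<Sum>p<2. pd i (ginv X m p) y * (cahn_hoffman \<gamma> X y \<bullet> pd p X y)
    + ginv X m p y * (pd i (cahn_hoffman \<gamma> X) y \<bullet> pd p X y + cahn_hoffman \<gamma> X y \<bullet> pd i (pd p X) y))"
  proof (rule sum.cong[OF refl])
    fix p assume "p \<in> {..<2::nat}"
    then have p: "p < 2" by simp
    show "pd i (\<lambda>y. ginv X m p y * (cahn_hoffman \<gamma> X y \<bullet> pd p X y)) y = pd i (ginv X m p) y * (cahn_hoffman \<gamma> X y \<bullet> pd p X y)
    + ginv X m p y * (pd i (cahn_hoffman \<gamma> X) y \<bullet> pd p X y + cahn_hoffman \<gamma> X y \<bullet> pd i (pd p X) y)"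
      unfolding pd_bil[OF bounded_bilinear_mult dginv[OF y m p] diff_bil[OF bounded_bilinear_inner dxi[OF y] dX1[OF y]]]
        pd_bil[OF bounded_bilinear_inner dxi[OF y] dX1[OF y]] ..
  qed
  finally show ?thesis .
qed

lemma det_prod: "y \<in> U \<Longrightarrow> tdet X (\<lambda>i. pd i (nrm X) y) y * tdet X (\<lambda>i. Amap \<gamma> (nrm X y) (pd i X y)) y
    = tdet X (\<lambda>i. pd i (cahn_hoffman \<gamma> X) y) y"
proof -
  assume y: "y \<in> U"
  define N where "N k i = (\<Sum>j<2. ginv X k j y * (pd i (nrm X) y \<bullet> pd j X y))" for k i
  define AX where "AX k j = Amap \<gamma> (nrm X y) (pd k X y) \<bullet> pd j X y" for k j
  note l = Amap_lin[OF nu_ne[OF y]]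
  have xi_exp: "pd i (cahn_hoffman \<gamma> X) y = (\<Sum>k<2. N k i *\<^sub>R Amap \<gamma> (nrm X y) (pd k X y))" for i
  proof -
    have "pd i (cahn_hoffman \<gamma> X) y = Amap \<gamma> (nrm X y) (pd i (nrm X) y)" by (rule pdxi[OF y])
    also have "pd i (nrm X) y = (\<Sum>k<2. N k i *\<^sub>R pd k X y)"
      unfolding N_def by (rule tangent_expand[OF y nu_nu_i[OF y]])
    finally show ?thesis unfolding sum2 linear_add[OF l] linear_scale[OF l] .
  qed
  have P: "pd i (cahn_hoffman \<gamma> X) y \<bullet> pd j X y = (\<Sum>k<2. N k i * AX k j)" for i j
    unfolding xi_exp sum2 inner_add_left inner_scaleR_left AX_def ..
  show ?thesis
    unfolding tdet_def Let_def P N_def[symmetric] AX_def[symmetric] sum2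
    by (simp add: algebra_simps)
qed

definition cl :: "nat \<Rightarrow> nat" where "cl a = (if a = 0 then 0 else 1)"

lemma cl_simps[simp]: "cl 0 = 0" "cl 1 = 1" "cl a < 2" by (auto simp: cl_def)

lemma pd_cl: "pd (cl a) f = pd a f"
proof (cases "a = 0")
  case False then show ?thesis unfolding pd_ne0[OF False] cl_def by simp
qed (simp add: cl_def)

lemma dW: "y \<in> U \<Longrightarrow> (\<lambda>y. \<Sum>m<2. tt m y *\<^sub>R pd m (cahn_hoffman \<gamma> X) y) differentiable at y"
  apply (rule differentiable_sum, simp)
  apply (rule ballI)
  apply (rule diff_bil[OF bounded_bilinear_scaleR dtt dpdxi])
  by auto

lemma pdW: "y \<in> U \<Longrightarrow> pd i (\<lambda>y. \<Sum>m<2. tt m y *\<^sub>R pd m (cahn_hoffman \<gamma> X) y) y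
   = (\<Sum>m<2. pd i (tt m) y *\<^sub>R pd m (cahn_hoffman \<gamma> X) y + tt m y *\<^sub>R pd i (pd m (cahn_hoffman \<gamma> X)) y)"
proof -
  assume y: "y \<in> U"
  have d: "\<And>m. m \<in> {..<2} \<Longrightarrow> (\<lambda>y. tt m y *\<^sub>R pd m (cahn_hoffman \<gamma> X) y) differentiable at y"
    by (rule diff_bil[OF bounded_bilinear_scaleR dtt[OF y] dpdxi[OF y]]) auto
  have "pd i (\<lambda>y. \<Sum>m<2. tt m y *\<^sub>R pd m (cahn_hoffman \<gamma> X) y) y
      = (\<Sum>m<2. pd i (\<lambda>y. tt m y *\<^sub>R pd m (cahn_hoffman \<gamma> X) y) y)"
    by (rule pd_sum[where A="{..<2}" and f="\<lambda>m y. tt m y *\<^sub>R pd m (cahn_hoffman \<gamma> X) y" and x=y, OF _ d]) auto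
  also have "\<dots> = (\<Sum>m<2. pd i (tt m) y *\<^sub>R pd m (cahn_hoffman \<gamma> X) y + tt m y *\<^sub>R pd i (pd m (cahn_hoffman \<gamma> X)) y)"
  proof (rule sum.cong[OF refl])
    fix m assume "m \<in> {..<2::nat}"
    then have m: "m < 2" by simp
    show "pd i (\<lambda>y. tt m y *\<^sub>R pd m (cahn_hoffman \<gamma> X) y) y = pd i (tt m) y *\<^sub>R pd m (cahn_hoffman \<gamma> X) y + tt m y *\<^sub>R pd i (pd m (cahn_hoffman \<gamma> X)) y"
      by (rule pd_bil[OF bounded_bilinear_scaleR dtt[OF y m] dpdxi[OF y]])
  qed
  finally show ?thesis .
qed

lemma pdsdiv: "y \<in> U \<Longrightarrow> pd m (sdiv X (cahn_hoffman \<gamma> X)) y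
   = (\<Sum>i<2. \<Sum>j<2. pd m (ginv X i j) y * (pd i (cahn_hoffman \<gamma> X) y \<bullet> pd j X y)
        + ginv X i j y * (pd m (pd i (cahn_hoffman \<gamma> X)) y \<bullet> pd j X y + pd i (cahn_hoffman \<gamma> X) y \<bullet> pd m (pd j X) y))"
proof -
  assume y: "y \<in> U"
  have dij: "(\<lambda>y. ginv X i j y * (pd i (cahn_hoffman \<gamma> X) y \<bullet> pd j X y)) differentiable at y" if "i < 2" "j < 2" for i j
    by (rule diff_bil[OF bounded_bilinear_mult dginv[OF y that] diff_bil[OF bounded_bilinear_inner dpdxi[OF y] dX1[OF y]]])
  have di: "(\<lambda>y. \<Sum>j<2. ginv X i j y * (pd i (cahn_hoffman \<gamma> X) y \<bullet> pd j X y)) differentiable at y" if "i < 2" for i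
    by (rule differentiable_sum) (use dij that in auto)
  have "pd m (sdiv X (cahn_hoffman \<gamma> X)) y
      = pd m (\<lambda>y. \<Sum>i<2. \<Sum>j<2. ginv X i j y * (pd i (cahn_hoffman \<gamma> X) y \<bullet> pd j X y)) y"
    by (simp add: sdiv_def[abs_def])
  also have "\<dots> = (\<Sum>i<2. pd m (\<lambda>y. \<Sum>j<2. ginv X i j y * (pd i (cahn_hoffman \<gamma> X) y \<bullet> pd j X y)) y)"
    by (rule pd_sum[where A="{..<2}" and f="\<lambda>i y. \<Sum>j<2. ginv X i j y * (pd i (cahn_hoffman \<gamma> X) y \<bullet> pd j X y)" and x=y]) (use di in auto)
  also have "\<dots> = (\<Sum>i<2. \<Sum>j<2. pd m (\<lambda>y. ginv X i j y * (pd i (cahn_hoffman \<gamma> X) y \<bullet> pd j X y)) y)"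
  proof (rule sum.cong[OF refl])
    fix i assume "i \<in> {..<2::nat}" then have i: "i < 2" by simp
    show "pd m (\<lambda>y. \<Sum>j<2. ginv X i j y * (pd i (cahn_hoffman \<gamma> X) y \<bullet> pd j X y)) y = (\<Sum>j<2. pd m (\<lambda>y. ginv X i j y * (pd i (cahn_hoffman \<gamma> X) y \<bullet> pd j X y)) y)"
      by (rule pd_sum[where A="{..<2}" and f="\<lambda>j y. ginv X i j y * (pd i (cahn_hoffman \<gamma> X) y \<bullet> pd j X y)" and x=y]) (use dij i in auto)
  qed
  also have "\<dots> = (\<Sum>i<2. \<Sum>j<2. pd m (ginv X i j) y * (pd i (cahn_hoffman \<gamma> X) y \<bullet> pd j X y)
        + ginv X i j y * (pd m (pd i (cahn_hoffman \<gamma> X)) y \<bullet> pd j X y + pd i (cahn_hoffman \<gamma> X) y \<bullet> pd m (pd j X) y))"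
  proof (intro sum.cong refl)
    fix i j assume "i \<in> {..<2::nat}" "j \<in> {..<2::nat}" then have ij: "i < 2" "j < 2" by auto
    show "pd m (\<lambda>y. ginv X i j y * (pd i (cahn_hoffman \<gamma> X) y \<bullet> pd j X y)) y = pd m (ginv X i j) y * (pd i (cahn_hoffman \<gamma> X) y \<bullet> pd j X y)
        + ginv X i j y * (pd m (pd i (cahn_hoffman \<gamma> X)) y \<bullet> pd j X y + pd i (cahn_hoffman \<gamma> X) y \<bullet> pd m (pd j X) y)"
      unfolding pd_bil[OF bounded_bilinear_mult dginv[OF y ij] diff_bil[OF bounded_bilinear_inner dpdxi[OF y] dX1[OF y]]]
        pd_bil[OF bounded_bilinear_inner dpdxi[OF y] dX1[OF y]] ..
  qed
  finally show ?thesis .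
qed

end



context surf begin

lemma main_pt:
  assumes x: "x \<in> U" and c: "\<forall>y\<in>U. aniso_mean_curv \<gamma> X y = c0"
  shows "jacobi \<gamma> X (\<lambda>y. \<gamma> (nrm X y)) x = (aniso_mean_curv \<gamma> X x)^2 - 2 * gauss_curv X x / wulff_curv \<gamma> X x"
proof -
  define gi where "gi a b = ginv X (cl a) (cl b) x" for a b
  define h where "h a b = nrm X x \<bullet> pd b (pd a X) x" for a b
  define P where "P i j = pd i (cahn_hoffman \<gamma> X) x \<bullet> pd j X x" for i j
  define xiX2 where "xiX2 p i = cahn_hoffman \<gamma> X x \<bullet> pd i (pd p X) x" for p i
  define xinu where "xinu i j = pd i (cahn_hoffman \<gamma> X) x \<bullet> pd j (nrm X) x" for i j
  define dt where "dt m i = pd i (tt (cl m)) x" for m i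
  define dgi where "dgi m a b = pd m (ginv X (cl a) (cl b)) x" for m a b
  define Gm where "Gm a b c = pd b (pd a X) x \<bullet> pd c X x" for a b c
  define Q where "Q m i j = pd i (pd m (cahn_hoffman \<gamma> X)) x \<bullet> pd j X x" for m i j
  define xiiX2 where "xiiX2 i j m = pd i (cahn_hoffman \<gamma> X) x \<bullet> pd m (pd j X) x" for i j m
  define t where "t m = tt (cl m) x" for m
  define s where "s p = cahn_hoffman \<gamma> X x \<bullet> pd p X x" for p
  define psi where "psi = cahn_hoffman \<gamma> X x \<bullet> nrm X x"
  have gs: "gi 1 0 = gi 0 1" unfolding gi_def cl_simps ginv_vals ..
  have Gs: "\<And>c. Gm 1 0 c = Gm 0 1 c" unfolding Gm_def Xsym[OF x, of 0 1] ..
  have hs: "h 1 0 = h 0 1" unfolding h_def Xsym[OF x, of 0 1] ..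
  have dgiE: "\<And>m a b. dgi m a b = - (\<Sum>c<2. \<Sum>d<2. gi a c * (Gm c m d + Gm d m c) * gi d b)"
    unfolding dgi_def gi_def Gm_def pdginv[OF x cl_simps(3) cl_simps(3)] sum2 cl_simps pdgmet[OF x]
    by (simp add: inner_commute)
  have xiX2E: "\<And>p i. xiX2 p i = (\<Sum>k<2. \<Sum>l<2. gi k l * s k * Gm p i l) + psi * h p i"
  proof -
    fix p i
    show "xiX2 p i = (\<Sum>k<2. \<Sum>l<2. gi k l * s k * Gm p i l) + psi * h p i"
      unfolding xiX2_def gi_def s_def Gm_def psi_def h_def
      using complete[OF x, of "cahn_hoffman \<gamma> X x" "pd i (pd p X) x"] by (simp add: sum2 inner_commute cl_def)
  qed
  have xiiX2E: "\<And>i j m. xiiX2 i j m = (\<Sum>k<2. \<Sum>l<2. gi k l * P i k * Gm j m l)"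
  proof -
    fix i j m
    show "xiiX2 i j m = (\<Sum>k<2. \<Sum>l<2. gi k l * P i k * Gm j m l)"
      unfolding xiiX2_def gi_def P_def Gm_def
      using complete[OF x, of "pd i (cahn_hoffman \<gamma> X) x" "pd m (pd j X) x"] xi_i_nu[OF x, of i]
      by (simp add: sum2 inner_commute cl_def)
  qed
  have xinuE: "\<And>i j. xinu i j = - (\<Sum>k<2. \<Sum>l<2. gi k l * P i k * h l j)"
  proof -
    fix i j
    show "xinu i j = - (\<Sum>k<2. \<Sum>l<2. gi k l * P i k * h l j)"
      unfolding xinu_def gi_def P_def h_def
      using complete[OF x, of "pd i (cahn_hoffman \<gamma> X) x" "pd j (nrm X) x"] xi_i_nu[OF x, of i]
      by (simp add: sum2 nu_i_X[OF x] algebra_simps cl_def)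
  qed
  have tE: "\<And>m. t m = (\<Sum>p<2. gi m p * s p)"
    unfolding t_def tt_def gi_def s_def sum2 cl_simps ..
  have dtE: "\<And>m i. dt m i = (\<Sum>p<2. dgi i m p * s p + gi m p * (P i p + xiX2 p i))"
    unfolding dt_def pdtt[OF x cl_simps(3)] dgi_def gi_def s_def P_def xiX2_def sum2 cl_simps ..
  have hypE: "\<And>m. (\<Sum>i<2. \<Sum>j<2. dgi m i j * P i j + gi i j * (Q i m j + xiiX2 i j m)) = 0"
  proof -
    fix m
    have "pd m (sdiv X (cahn_hoffman \<gamma> X)) x = 0"
      by (rule pd_zero_const[OF U x, where c="- c0"]) (use c in \<open>auto simp: aniso_mean_curv_def\<close>)
    then show "(\<Sum>i<2. \<Sum>j<2. dgi m i j * P i j + gi i j * (Q i m j + xiiX2 i j m)) = 0"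
      unfolding pdsdiv[OF x] dgi_def P_def gi_def Q_def xiiX2_def sum2 cl_simps .
  qed
  have Qs: "\<And>m i j. Q m i j = Q i m j"
    unfolding Q_def using xisym[OF x] by simp
  note F = final_alg[OF gs Gs hs dgiE xiX2E xiiX2E xinuE tE dtE hypE Qs]
  have J: "jacobi \<gamma> X (\<lambda>y. \<gamma> (nrm X y)) x = (\<Sum>i<2. \<Sum>j<2. gi i j * (\<Sum>m<2. dt m i * P m j + t m * Q m i j))
           + (\<Sum>i<2. \<Sum>j<2. gi i j * xinu i j) * psi"
  proof -
    have pW: "pd i (\<lambda>y. Amap \<gamma> (nrm X y) (sgrad X (\<lambda>y. \<gamma> (nrm X y)) y)) x
        = (\<Sum>m<2. pd i (tt m) x *\<^sub>R pd m (cahn_hoffman \<gamma> X) x + tt m x *\<^sub>R pd i (pd m (cahn_hoffman \<gamma> X)) x)" for i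
    proof -
      have "pd i (\<lambda>y. \<Sum>m<2. tt m y *\<^sub>R pd m (cahn_hoffman \<gamma> X) y) x = pd i (\<lambda>y. Amap \<gamma> (nrm X y) (sgrad X (\<lambda>y. \<gamma> (nrm X y)) y)) x"
        by (rule pd_local[OF U x W_eq[symmetric] dW[OF x]])
      then show ?thesis using pdW[OF x] by simp
    qed
    have ps: "\<gamma> (nrm X x) = psi" unfolding psi_def xi_nu[OF x] ..
    show ?thesis
      unfolding jacobi_def sdiv_def dinner_def pW ps
      unfolding sum2 inner_add_left inner_scaleR_left gi_def dt_def t_def P_def Q_def xinu_def cl_simps ..
  qed
  have R: "(aniso_mean_curv \<gamma> X x)^2 - 2 * gauss_curv X x / wulff_curv \<gamma> X x
     = (\<Sum>i<2. \<Sum>j<2. gi i j * P i j)^2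
           - 2 * ((\<Sum>j<2. gi 0 j * P 0 j) * (\<Sum>j<2. gi 1 j * P 1 j)
                  - (\<Sum>j<2. gi 0 j * P 1 j) * (\<Sum>j<2. gi 1 j * P 0 j))"
  proof -
    have a: "(aniso_mean_curv \<gamma> X x)^2 = (\<Sum>i<2. \<Sum>j<2. gi i j * P i j)^2"
    proof -
      have "aniso_mean_curv \<gamma> X x = - (\<Sum>i<2. \<Sum>j<2. gi i j * P i j)"
        unfolding aniso_mean_curv_def sdiv_def gi_def P_def sum2 cl_simps ..
      then show ?thesis by (simp only: power2_minus)
    qed
    have "gauss_curv X x / wulff_curv \<gamma> X x = tdet X (\<lambda>i. pd i (nrm X) x) x * tdet X (\<lambda>i. Amap \<gamma> (nrm X x) (pd i X x)) x"
      unfolding gauss_curv_def wulff_curv_def by simp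
    also have "\<dots> = tdet X (\<lambda>i. pd i (cahn_hoffman \<gamma> X) x) x" by (rule det_prod[OF x])
    also have "\<dots> = (\<Sum>j<2. gi 0 j * P 0 j) * (\<Sum>j<2. gi 1 j * P 1 j) - (\<Sum>j<2. gi 0 j * P 1 j) * (\<Sum>j<2. gi 1 j * P 0 j)"
      unfolding tdet_def Let_def gi_def P_def sum2 cl_simps ..
    finally show ?thesis using a by simp
  qed
  show ?thesis unfolding J R by (rule F)
qed

end

theorem lemma0p2:
  fixes X :: "real \<times> real \<Rightarrow> real^3" and U :: "(real \<times> real) set"
    and \<gamma> :: "real^3 \<Rightarrow> real"
  assumes "open U"
    and "Ck 3 X U"
    and "\<forall>x\<in>U. cross3 (pd 0 X x) (pd 1 X x) \<noteq> 0"
    and "\<forall>y\<in>sphere 0 1. \<gamma> y > 0"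
    and "Ck 3 (gext \<gamma>) (- {0})"
    and "\<exists>c. \<forall>x\<in>U. aniso_mean_curv \<gamma> X x = c"
  shows "\<forall>x\<in>U. jacobi \<gamma> X (\<lambda>y. \<gamma> (nrm X y)) x
                = (aniso_mean_curv \<gamma> X x)^2 - 2 * gauss_curv X x / wulff_curv \<gamma> X x"
proof -
  interpret surf X U \<gamma> using assms(1,2,3,5) by unfold_locales
  obtain c0 where c: "\<forall>x\<in>U. aniso_mean_curv \<gamma> X x = c0" using assms(6) by blast
  show ?thesis using main_pt[OF _ c] by blast
qed


end
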